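(* Every half dual polar graph is geodesic-transitive.
   Context: Let $W$ be a $2\omega$-dimensional vector space over $\mathbb{F}_q$ with a non-degenerate quadratic form of plus type (Witt index $\omega\ge2$). The dual polar graph of $W$ has as vertices the totally singular $\omega$-subspaces, two adjacent iff they meet in dimension $\omega-1$; this graph is bipartite. A half dual polar graph is a halved graph of it: the graph on one of the two parts, two vertices adjacent iff they are at distance $2$ in the dual polar graph (equivalently, iff they meet in dimension $\omega-2$). A geodesic of length $\ell$ is a vertex sequence $(v_0,\dots,v_\ell)$ with consecutive vertices adjacent and $d(v_0,v_\ell)=\ell$; a graph is geodesic-transitive if its automorphism group is transitive on geodesics of each length. *)

theory Defs
  imports Complex_Main "HOL-Library.Function_Algebras"
begin

definition fscale :: "'a::field \<Rightarrow> ('n \<Rightarrow> 'a) \<Rightarrow> ('n \<Rightarrow> 'a)" where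
  "fscale c x = (\<lambda>i. c * x i)"

abbreviation fsubspace :: "('n \<Rightarrow> 'a::field) set \<Rightarrow> bool" where
  "fsubspace U \<equiv> module.subspace fscale U"

abbreviation fdim :: "('n \<Rightarrow> 'a::field) set \<Rightarrow> nat" where
  "fdim U \<equiv> vector_space.dim fscale U"

text \<open>A quadratic form on F^n, given by a coefficient matrix C: Q(x) = sum_{i,j} C i j x_i x_j.
  Every quadratic form arises this way.\<close>
definition qform :: "('n::finite \<Rightarrow> 'n \<Rightarrow> 'a::field) \<Rightarrow> ('n \<Rightarrow> 'a) \<Rightarrow> 'a" where
  "qform C x = (\<Sum>i\<in>UNIV. \<Sum>j\<in>UNIV. C i j * x i * x j)"

definition polar :: "('n::finite \<Rightarrow> 'n \<Rightarrow> 'a::field) \<Rightarrow> ('n \<Rightarrow> 'a) \<Rightarrow> ('n \<Rightarrow> 'a) \<Rightarrow> 'a" where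
  "polar C x y = qform C (x + y) - qform C x - qform C y"

definition nondegenerate :: "('n::finite \<Rightarrow> 'n \<Rightarrow> 'a::field) \<Rightarrow> bool" where
  "nondegenerate C \<longleftrightarrow> (\<forall>x. (\<forall>y. polar C x y = 0) \<longrightarrow> x = 0)"

definition totally_singular :: "('n::finite \<Rightarrow> 'n \<Rightarrow> 'a::field) \<Rightarrow> ('n \<Rightarrow> 'a) set \<Rightarrow> bool" where
  "totally_singular C U \<longleftrightarrow> fsubspace U \<and> (\<forall>x\<in>U. qform C x = 0)"

definition witt_index :: "('n::finite \<Rightarrow> 'n \<Rightarrow> 'a::field) \<Rightarrow> nat" where
  "witt_index C = Max {fdim U | U. totally_singular C U}"

definition dp_vertices :: "('n::finite \<Rightarrow> 'n \<Rightarrow> 'a::field) \<Rightarrow> nat \<Rightarrow> ('n \<Rightarrow> 'a) set set" where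
  "dp_vertices C w = {U. totally_singular C U \<and> fdim U = w}"

text \<open>The bipartite half of the dual polar graph containing U0: vertices at even
  distance from U0, i.e. with w - dim(U \<inter> U0) even.\<close>
definition half_vertices ::
  "('n::finite \<Rightarrow> 'n \<Rightarrow> 'a::field) \<Rightarrow> nat \<Rightarrow> ('n \<Rightarrow> 'a) set \<Rightarrow> ('n \<Rightarrow> 'a) set set" where
  "half_vertices C w U0 = {U \<in> dp_vertices C w. even (w - fdim (U \<inter> U0))}"

definition half_adj :: "nat \<Rightarrow> ('n \<Rightarrow> 'a::field) set \<Rightarrow> ('n \<Rightarrow> 'a) set \<Rightarrow> bool" where
  "half_adj w U U' \<longleftrightarrow> fdim (U \<inter> U') + 2 = w"

definition walk :: "'v set \<Rightarrow> ('v \<Rightarrow> 'v \<Rightarrow> bool) \<Rightarrow> 'v list \<Rightarrow> bool" where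
  "walk V E xs \<longleftrightarrow> xs \<noteq> [] \<and> set xs \<subseteq> V \<and>
     (\<forall>i. Suc i < length xs \<longrightarrow> E (xs ! i) (xs ! Suc i))"

definition gdist :: "'v set \<Rightarrow> ('v \<Rightarrow> 'v \<Rightarrow> bool) \<Rightarrow> 'v \<Rightarrow> 'v \<Rightarrow> nat" where
  "gdist V E u v = (LEAST n. \<exists>xs. walk V E xs \<and> hd xs = u \<and> last xs = v \<and> length xs = Suc n)"

definition geodesic :: "'v set \<Rightarrow> ('v \<Rightarrow> 'v \<Rightarrow> bool) \<Rightarrow> 'v list \<Rightarrow> bool" where
  "geodesic V E xs \<longleftrightarrow> walk V E xs \<and> gdist V E (hd xs) (last xs) = length xs - 1"

definition graph_aut :: "'v set \<Rightarrow> ('v \<Rightarrow> 'v \<Rightarrow> bool) \<Rightarrow> ('v \<Rightarrow> 'v) \<Rightarrow> bool" where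
  "graph_aut V E \<sigma> \<longleftrightarrow> bij_betw \<sigma> V V \<and> (\<forall>u\<in>V. \<forall>v\<in>V. E (\<sigma> u) (\<sigma> v) \<longleftrightarrow> E u v)"

definition geodesic_transitive :: "'v set \<Rightarrow> ('v \<Rightarrow> 'v \<Rightarrow> bool) \<Rightarrow> bool" where
  "geodesic_transitive V E \<longleftrightarrow>
     (\<forall>xs ys. geodesic V E xs \<and> geodesic V E ys \<and> length xs = length ys \<longrightarrow>
        (\<exists>\<sigma>. graph_aut V E \<sigma> \<and> map \<sigma> xs = ys))"

end

theory Submission
  imports Defs
begin

lemma sum_fun_app: "(sum f A) x = sum (\<lambda>a. f a x) A"
  by (induction A rule: infinite_finite_induct) auto

lemma fscale_apply: "fscale c x i = c * x i"
  by (simp add: fscale_def)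

definition ebas :: "'n \<Rightarrow> 'n \<Rightarrow> 'a::field" where
  "ebas i = (\<lambda>j. if j = i then 1 else 0)"

interpretation fv: vector_space "fscale :: 'a::field \<Rightarrow> ('n \<Rightarrow> 'a) \<Rightarrow> _"
  by unfold_locales (auto simp: fscale_def fun_eq_iff algebra_simps)

lemma ebas_expand: "x = (\<Sum>i\<in>UNIV. fscale (x i) (ebas i)) " for x :: "'n::finite \<Rightarrow> 'a::field"
proof -
  have "\<And>j. (\<Sum>a\<in>UNIV. x a * (if j = a then 1 else 0)) = x j"
    by (simp add: if_distrib[of "(*) _"] cong: if_cong)
  then show ?thesis by (auto simp: fun_eq_iff sum_fun_app ebas_def fscale_apply)
qed

interpretation fv: finite_dimensional_vector_space "fscale :: 'a::field \<Rightarrow> ('n::finite \<Rightarrow> 'a) \<Rightarrow> _" "range ebas"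
proof
  show "finite (range (ebas :: 'n \<Rightarrow> 'n \<Rightarrow> 'a))" by simp
  show "fv.span (range (ebas :: 'n \<Rightarrow> 'n \<Rightarrow> 'a)) = UNIV"
  proof -
    { fix x :: "'n \<Rightarrow> 'a"
    have "(\<Sum>i\<in>UNIV. fscale (x i) (ebas i)) \<in> fv.span (range ebas)"
      by (intro fv.span_sum fv.span_scale fv.span_base) auto
    then have "x \<in> fv.span (range ebas)" using ebas_expand[of x] by simp }
    then show ?thesis by auto
  qed
  show "fv.independent (range (ebas :: 'n \<Rightarrow> 'n \<Rightarrow> 'a))"
    unfolding fv.independent_explicit_module
  proof (intro allI impI)
    fix t u v assume h: "finite t" "t \<subseteq> range (ebas :: 'n \<Rightarrow> 'n \<Rightarrow> 'a)" "(\<Sum>v\<in>t. fscale (u v) v) = 0" "v \<in> t"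
    then obtain i where vi: "v = ebas i" by auto
    have "0 = (\<Sum>v\<in>t. fscale (u v) v) i" using h by simp
    also have "\<dots> = (\<Sum>v\<in>t. u v * v i)" by (simp add: sum_fun_app fscale_apply)
    also have "\<dots> = u v * v i"
    proof (rule sum.remove[OF h(1) h(4), THEN trans], simp)
      show "(\<Sum>x\<in>t - {v}. u x * x i) = 0"
      proof (intro sum.neutral ballI)
        fix y assume y: "y \<in> t - {v}"
        then obtain k where yk: "y = ebas k" using h(2) by auto
        then have "k \<noteq> i" using y vi by auto
        then show "u y * y i = 0" by (simp add: yk ebas_def)
      qed
    qed
    finally show "u v = 0" by (simp add: vi ebas_def)
  qed
qed

interpretation fvp: finite_dimensional_vector_space_pair_1
  "fscale :: 'a::field \<Rightarrow> ('n::finite \<Rightarrow> 'a) \<Rightarrow> _" "range ebas" "fscale :: 'a \<Rightarrow> ('n \<Rightarrow> 'a) \<Rightarrow> _"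
  by unfold_locales

lemma card_range_ebas[simp]: "card (range (ebas :: 'n::finite \<Rightarrow> 'n \<Rightarrow> 'a::field)) = card (UNIV :: 'n set)"
proof -
  have "inj (ebas :: 'n \<Rightarrow> 'n \<Rightarrow> 'a)" by (auto simp: inj_def ebas_def fun_eq_iff)
  then show ?thesis by (simp add: card_image)
qed

lemma fdim_UNIV: "fdim (UNIV :: ('n::finite \<Rightarrow> 'a::field) set) = card (UNIV :: 'n set)"
  by simp


section \<open>Polar form algebra\<close>

lemma polar_expand: "polar C x y = (\<Sum>i\<in>UNIV. \<Sum>j\<in>UNIV. C i j * (x i * y j + y i * x j))"
  by (simp add: polar_def qform_def sum_subtractf[symmetric] algebra_simps)

lemma polar_sym: "polar C x y = polar C y x"
  by (simp add: polar_def algebra_simps)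

lemma polar_add_left: "polar C (x + y) z = polar C x z + polar C y z"
  by (simp add: polar_expand algebra_simps sum.distrib)

lemma polar_add_right: "polar C z (x + y) = polar C z x + polar C z y"
  by (simp add: polar_expand algebra_simps sum.distrib)

lemma polar_scale_left: "polar C (fscale c x) y = c * polar C x y"
  by (simp add: polar_expand algebra_simps sum_distrib_left fscale_apply)

lemma polar_scale_right: "polar C y (fscale c x) = c * polar C y x"
  by (simp add: polar_expand algebra_simps sum_distrib_left fscale_apply)

lemma polar_zero_left[simp]: "polar C 0 y = 0"
  by (simp add: polar_expand)

lemma polar_zero_right[simp]: "polar C y 0 = 0"
  by (simp add: polar_expand)

lemma polar_neg_left: "polar C (- x) y = - polar C x y"
  by (simp add: polar_expand sum_negf[symmetric] algebra_simps)

lemma polar_neg_right: "polar C y (- x) = - polar C y x"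
  by (simp add: polar_expand sum_negf[symmetric] algebra_simps)

lemma polar_diff_left: "polar C (x - y) z = polar C x z - polar C y z"
  using polar_add_left[of C x "-y" z] by (simp add: polar_neg_left)

lemma polar_diff_right: "polar C z (x - y) = polar C z x - polar C z y"
  using polar_diff_left[of C x y z] by (simp add: polar_sym)

lemma polar_sum_left: "polar C (sum f A) y = (\<Sum>a\<in>A. polar C (f a) y)"
  apply (induction A rule: infinite_finite_induct)
    apply (subst sum.infinite, assumption, subst sum.infinite, assumption, rule polar_zero_left)
   apply (simp only: sum.empty polar_zero_left)
  apply (simp only: sum.insert polar_add_left not_False_eq_True)
  done


lemma qform_add: "qform C (x + y) = qform C x + qform C y + polar C x y"
  by (simp add: polar_def)

lemma qform_scale: "qform C (fscale c x) = c * c * qform C x"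
  by (simp add: qform_def sum_distrib_left algebra_simps fscale_apply)

lemma qform_zero[simp]: "qform C 0 = 0"
  by (simp add: qform_def)

lemma qform_neg: "qform C (- x) = qform C x"
  by (simp add: qform_def)

lemma qform_diff: "qform C (x - y) = qform C x + qform C y - polar C x y"
  using qform_add[of C x "-y"] by (simp add: qform_neg polar_neg_right)

section \<open>Perp\<close>

definition perp :: "('n::finite \<Rightarrow> 'n \<Rightarrow> 'a::field) \<Rightarrow> ('n \<Rightarrow> 'a) set \<Rightarrow> ('n \<Rightarrow> 'a) set" where
  "perp C S = {y. \<forall>x\<in>S. polar C x y = 0}"

lemma perp_subspace: "fsubspace (perp C S)"
  unfolding fv.subspace_def perp_def by (auto simp: polar_add_right polar_scale_right)

lemma perp_anti: "S \<subseteq> T \<Longrightarrow> perp C T \<subseteq> perp C S"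
  by (auto simp: perp_def)

lemma perp_span: "perp C (fv.span S) = perp C S"
proof
  show "perp C (fv.span S) \<subseteq> perp C S" by (rule perp_anti) (rule fv.span_superset)
  show "perp C S \<subseteq> perp C (fv.span S)"
  proof
    fix y assume y: "y \<in> perp C S"
    have "fv.span S \<subseteq> {x. polar C x y = 0}"
    proof (rule fv.span_minimal)
      show "S \<subseteq> {x. polar C x y = 0}" using y by (auto simp: perp_def)
      show "fsubspace {x. polar C x y = 0}"
        by (auto simp: fv.subspace_def polar_add_left polar_scale_left)
    qed
    then show "y \<in> perp C (fv.span S)" by (auto simp: perp_def)
  qed
qed

lemma perp_Un: "perp C (S \<union> T) = perp C S \<inter> perp C T"
  by (auto simp: perp_def)

lemma perp_insert: "perp C (insert x S) = perp C S \<inter> {y. polar C x y = 0}"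
  by (auto simp: perp_def)

lemma hyper_dim:
  fixes f :: "('n::finite \<Rightarrow> 'a::field) \<Rightarrow> 'a"
  assumes T: "fsubspace T" and add: "\<And>x y. f (x + y) = f x + f y"
    and sc: "\<And>c x. f (fscale c x) = c * f x"
  shows "fdim T \<le> fdim (T \<inter> {y. f y = 0}) + 1"
proof (cases "T \<subseteq> {y. f y = 0}")
  case True then have "T \<inter> {y. f y = 0} = T" by auto
  then show ?thesis by simp
next
  case False
  then obtain v where v: "v \<in> T" "f v \<noteq> 0" by auto
  let ?K = "T \<inter> {y. f y = 0}"
  have "T \<subseteq> fv.span (insert v ?K)"
  proof
    fix t assume t: "t \<in> T"
    let ?c = "f t / f v"
    have d: "t - fscale ?c v \<in> ?K"
    proof
      show "t - fscale ?c v \<in> T" using T t v by (simp add: fv.subspace_diff fv.subspace_scale)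
      have "f (t - fscale ?c v) = f t - ?c * f v"
        using add[of "t - fscale ?c v" "fscale ?c v"] sc[of ?c v] by (simp add: algebra_simps)
      also have "?c * f v = f t" using v by simp
      finally show "t - fscale ?c v \<in> {y. f y = 0}" by (simp only: mem_Collect_eq diff_self)
    qed
    have "t = (t - fscale ?c v) + fscale ?c v" by simp
    also have "\<dots> \<in> fv.span (insert v ?K)"
      using d by (intro fv.span_add fv.span_scale fv.span_base) auto
    finally show "t \<in> fv.span (insert v ?K)" .
  qed
  then have "fdim T \<le> fdim (insert v ?K)" by (rule fv.dim_mono)
  also have "\<dots> \<le> fdim ?K + 1" by (simp add: fv.dim_insert)
  finally show ?thesis .
qed

lemma perp_dim_lower_fin:
  fixes C :: "'n::finite \<Rightarrow> 'n \<Rightarrow> 'a::field"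
  assumes "finite G"
  shows "card (UNIV :: 'n set) \<le> fdim (perp C G) + card G"
  using assms
proof (induction G rule: finite_induct)
  case empty
  have "perp C {} = UNIV" by (simp add: perp_def)
  then show ?case by simp
next
  case (insert x G)
  have "fdim (perp C G) \<le> fdim (perp C (insert x G)) + 1"
    unfolding perp_insert
    by (rule hyper_dim[OF perp_subspace]) (auto simp: polar_add_right polar_scale_right)
  then show ?case using insert by simp
qed

lemma perp_dim_lower:
  fixes C :: "'n::finite \<Rightarrow> 'n \<Rightarrow> 'a::field"
  shows "card (UNIV :: 'n set) \<le> fdim (perp C S) + fdim S"
proof -
  obtain Bs where Bs: "Bs \<subseteq> S" "fv.independent Bs" "S \<subseteq> fv.span Bs" "card Bs = fdim S"
    using fv.basis_exists[of S] by blast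
  have fin: "finite Bs" using Bs(2) fv.finiteI_independent by blast
  have "fv.span Bs = fv.span S"
    using Bs by (metis fv.span_eq fv.span_superset subset_trans)
  then have "perp C S = perp C Bs" by (metis perp_span)
  then show ?thesis using perp_dim_lower_fin[OF fin, of C] Bs(4) by simp
qed


section \<open>Nondegenerate setting\<close>

abbreviation ssum :: "('n \<Rightarrow> 'a::field) set \<Rightarrow> ('n \<Rightarrow> 'a) set \<Rightarrow> ('n \<Rightarrow> 'a) set" where
  "ssum S T \<equiv> {x + y | x y. x \<in> S \<and> y \<in> T}"

lemma fdim_le_n: "fdim (S :: ('n::finite \<Rightarrow> 'a::field) set) \<le> card (UNIV :: 'n set)"
  using fv.dim_subset[of S UNIV] by simp

locale qf =
  fixes C :: "'n::finite \<Rightarrow> 'n \<Rightarrow> 'a::field" and w :: nat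
  assumes nd: "nondegenerate C" and cardn: "card (UNIV :: 'n set) = 2 * w"
begin

lemma perp_UNIV: "perp C UNIV = {0}"
  using nd by (auto simp: perp_def nondegenerate_def polar_sym)

lemma perp_dim:
  assumes S: "fsubspace S"
  shows "fdim (perp C S) + fdim S = 2 * w"
proof -
  obtain Bs where Bs: "finite Bs" "Bs \<subseteq> S" "fv.independent Bs" "fv.span Bs = S" "card Bs = fdim S"
    using fv.basis_subspace_exists[OF S] by blast
  obtain B where B: "Bs \<subseteq> B" "B \<subseteq> UNIV" "fv.independent B" "UNIV \<subseteq> fv.span B"
    by (rule fv.maximal_independent_subset_extend[OF subset_UNIV Bs(3)])
  have finB: "finite B" using B(3) fv.finiteI_independent by blast
  have cB: "card B = 2 * w"
    using fv.basis_card_eq_dim[of B UNIV] B cardn by simp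
  define D where "D = B - Bs"
  have finD: "finite D" using finB by (simp add: D_def)
  have cD: "card D = 2 * w - fdim S"
    using Bs B cB finB by (simp add: D_def card_Diff_subset finite_subset)
  have "perp C S \<inter> perp C D = perp C (Bs \<union> D)"
    using perp_span[of C Bs] Bs(4) by (simp add: perp_Un)
  also have "Bs \<union> D = B" using B(1) by (auto simp: D_def)
  also have "perp C B = perp C UNIV"
  proof -
    have "fv.span B = UNIV" using B(4) by auto
    then show ?thesis using perp_span[of C B] by simp
  qed
  finally have int0: "perp C S \<inter> perp C D = {0}" by (simp add: perp_UNIV)
  have "fdim (ssum (perp C S) (perp C D)) + fdim (perp C S \<inter> perp C D) = fdim (perp C S) + fdim (perp C D)"
    by (rule fv.dim_sums_Int[OF perp_subspace perp_subspace])
  moreover have "fdim (ssum (perp C S) (perp C D)) \<le> 2 * w" using fdim_le_n[of "ssum (perp C S) (perp C D)"] cardn by simp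
  moreover have "fdim (perp C S \<inter> perp C D) = 0" using int0 by simp
  moreover have "2 * w \<le> fdim (perp C D) + fdim D" using perp_dim_lower[of C D] cardn by simp
  moreover have "fdim D \<le> card D" using fv.dim_le_card'[OF finD] .
  moreover have "2 * w \<le> fdim (perp C S) + fdim S" using perp_dim_lower[of C S] cardn by simp
  moreover have "fdim S \<le> 2 * w" using fdim_le_n[of S] cardn by simp
  ultimately show ?thesis using cD by linarith
qed


abbreviation Q where "Q \<equiv> qform C"
abbreviation Bp where "Bp \<equiv> polar C"
abbreviation Mx where "Mx \<equiv> dp_vertices C w"

lemma mx_sub: "U \<in> Mx \<Longrightarrow> fsubspace U"
  by (simp add: dp_vertices_def totally_singular_def)
lemma mx_q: "U \<in> Mx \<Longrightarrow> x \<in> U \<Longrightarrow> Q x = 0"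
  by (simp add: dp_vertices_def totally_singular_def)
lemma mx_dim: "U \<in> Mx \<Longrightarrow> fdim U = w"
  by (simp add: dp_vertices_def)

lemma ts_orth:
  assumes "totally_singular C S" "x \<in> S" "y \<in> S"
  shows "Bp x y = 0"
proof -
  have "x + y \<in> S" using assms by (simp add: totally_singular_def fv.subspace_add)
  then show ?thesis using assms by (simp add: totally_singular_def polar_def)
qed

lemma ts_perp: "totally_singular C S \<Longrightarrow> S \<subseteq> perp C S"
  by (auto simp: perp_def intro: ts_orth)

lemma ts_dim: "totally_singular C S \<Longrightarrow> fdim S \<le> w"
proof -
  assume ts: "totally_singular C S"
  then have "fdim S \<le> fdim (perp C S)" using ts_perp fv.dim_subset by blast
  moreover have "fdim (perp C S) + fdim S = 2 * w"
    using ts by (intro perp_dim) (simp add: totally_singular_def)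
  ultimately show ?thesis by linarith
qed

lemma mx_ts: "U \<in> Mx \<Longrightarrow> totally_singular C U"
  by (simp add: dp_vertices_def)

lemma mx_orth: "U \<in> Mx \<Longrightarrow> x \<in> U \<Longrightarrow> y \<in> U \<Longrightarrow> Bp x y = 0"
  using ts_orth mx_ts by blast

lemma mx_perp: assumes U: "U \<in> Mx" shows "perp C U = U"
proof -
  have "U \<subseteq> perp C U" using ts_perp mx_ts U by blast
  moreover have "fdim (perp C U) = w" using perp_dim[OF mx_sub[OF U]] mx_dim[OF U] by simp
  ultimately have "U = perp C U"
    using fv.subspace_dim_equal[OF mx_sub[OF U] perp_subspace, of C] mx_dim[OF U] by simp
  then show ?thesis by simp
qed

lemma mx_perpD: "U \<in> Mx \<Longrightarrow> x \<notin> U \<Longrightarrow> \<exists>u\<in>U. Bp u x \<noteq> 0"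
  using mx_perp[of U] by (auto simp: perp_def)

lemma dim_sum_bound:
  fixes A B X :: "('n \<Rightarrow> 'a) set"
  assumes "fsubspace A" "fsubspace B" "fsubspace X" "A \<subseteq> X" "B \<subseteq> X"
  shows "fdim A + fdim B \<le> fdim X + fdim (A \<inter> B)"
proof -
  have "fdim (ssum A B) + fdim (A \<inter> B) = fdim A + fdim B"
    by (rule fv.dim_sums_Int[OF assms(1,2)])
  moreover have "ssum A B \<subseteq> X" using assms by (auto intro: fv.subspace_add)
  then have "fdim (ssum A B) \<le> fdim X" by (rule fv.dim_subset)
  ultimately show ?thesis by linarith
qed

lemma int_dim_le: "U \<in> Mx \<Longrightarrow> fdim (U \<inter> V) \<le> w"
  using fv.dim_subset[of "U \<inter> V" U] mx_dim by auto

lemma triangle: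
  assumes "U \<in> Mx" "V \<in> Mx" "W \<in> Mx"
  shows "fdim (U \<inter> V) + fdim (V \<inter> W) \<le> w + fdim (U \<inter> W)"
proof -
  have "fdim (U \<inter> V) + fdim (V \<inter> W) \<le> fdim V + fdim ((U \<inter> V) \<inter> (V \<inter> W))"
    using assms by (intro dim_sum_bound) (auto intro: fv.subspace_inter mx_sub)
  moreover have "fdim ((U \<inter> V) \<inter> (V \<inter> W)) \<le> fdim (U \<inter> W)"
    by (rule fv.dim_subset) auto
  ultimately show ?thesis using mx_dim[OF assms(2)] by linarith
qed

lemma convex:
  assumes "U \<in> Mx" "V \<in> Mx" "W \<in> Mx"
    and eq: "fdim (U \<inter> V) + fdim (V \<inter> W) \<ge> w + fdim (U \<inter> W)"
  shows "U \<inter> W \<subseteq> V"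
proof -
  have "fdim (U \<inter> V) + fdim (V \<inter> W) \<le> fdim V + fdim ((U \<inter> V) \<inter> (V \<inter> W))"
    using assms by (intro dim_sum_bound) (auto intro: fv.subspace_inter mx_sub)
  then have ge: "fdim (U \<inter> W) \<le> fdim ((U \<inter> V) \<inter> (V \<inter> W))"
    using eq mx_dim[OF assms(2)] by linarith
  have "(U \<inter> V) \<inter> (V \<inter> W) = U \<inter> W"
    by (rule fv.subspace_dim_equal) (use assms ge in \<open>auto intro: fv.subspace_inter mx_sub\<close>)
  then show ?thesis by blast
qed

lemma mx_eq: "U \<in> Mx \<Longrightarrow> V \<in> Mx \<Longrightarrow> fdim (U \<inter> V) \<ge> w \<Longrightarrow> U = V"
proof -
  assume a: "U \<in> Mx" "V \<in> Mx" "fdim (U \<inter> V) \<ge> w"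
  have "U \<inter> V = U" by (rule fv.subspace_dim_equal) (use a mx_dim in \<open>auto intro: fv.subspace_inter mx_sub\<close>)
  moreover have "U \<inter> V = V" by (rule fv.subspace_dim_equal) (use a mx_dim in \<open>auto intro: fv.subspace_inter mx_sub\<close>)
  ultimately show ?thesis by simp
qed

lemma ts_insert:
  assumes H: "totally_singular C H" and qx: "Q x = 0" and xp: "x \<in> perp C H"
  shows "totally_singular C (fv.span (insert x H))"
  unfolding totally_singular_def
proof (intro conjI ballI)
  show "fsubspace (fv.span (insert x H))" by simp
  fix z assume "z \<in> fv.span (insert x H)"
  then obtain k where k: "z - fscale k x \<in> fv.span H" using fv.span_breakdown_eq by blast
  have sH: "fv.span H = H" using H by (simp add: totally_singular_def)
  define h where "h = z - fscale k x"
  have hH: "h \<in> H" using k sH by (simp add: h_def)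
  have z: "z = h + fscale k x" by (simp add: h_def)
  have "Q z = Q h + Q (fscale k x) + Bp h (fscale k x)" by (simp add: z qform_add)
  also have "Q h = 0" using H hH by (simp add: totally_singular_def)
  also have "Q (fscale k x) = 0" using qx by (simp add: qform_scale)
  also have "Bp h (fscale k x) = 0"
    using xp hH by (simp add: polar_scale_right perp_def)
  finally show "Q z = 0" by simp
qed

lemma hyper_int:
  assumes U: "fsubspace U" and y: "\<exists>u\<in>U. Bp y u \<noteq> 0"
  shows "fdim (U \<inter> {z. Bp y z = 0}) + 1 = fdim U"
proof -
  have le: "fdim U \<le> fdim (U \<inter> {z. Bp y z = 0}) + 1"
    by (rule hyper_dim[OF U]) (auto simp: polar_add_right polar_scale_right)
  have sub: "fsubspace (U \<inter> {z. Bp y z = 0})"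
    using U unfolding fv.subspace_def by (auto simp: polar_add_right polar_scale_right)
  have "U \<inter> {z. Bp y z = 0} \<noteq> U" using y by auto
  then have "fdim (U \<inter> {z. Bp y z = 0}) < fdim U"
    using fv.subspace_dim_equal[OF sub U] fv.dim_subset[of "U \<inter> {z. Bp y z = 0}" U] by force
  with le show ?thesis by linarith
qed

lemma span_insert_sub:
  assumes "fsubspace X" "x \<in> X" "H \<subseteq> X"
  shows "fv.span (insert x H) \<subseteq> X"
  using assms by (intro fv.span_minimal) auto

lemma dim_span_insert:
  fixes H :: "('n \<Rightarrow> 'a) set"
  assumes "fsubspace H" "x \<notin> H"
  shows "fdim (fv.span (insert x H)) = fdim H + 1"
proof -
  have sp: "fv.span H = H" using assms by simp
  have "x \<notin> fv.span H" by (subst sp) (rule assms(2))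
  then show ?thesis using fv.dim_insert[of x H] by simp
qed


lemma ts_sub: "totally_singular C U \<Longrightarrow> fsubspace H \<Longrightarrow> H \<subseteq> U \<Longrightarrow> totally_singular C H"
  by (auto simp: totally_singular_def)

lemma step_toward:
  assumes U: "U \<in> Mx" and W: "W \<in> Mx" and ne: "U \<noteq> W"
  shows "\<exists>U'\<in>Mx. fdim (U \<inter> U') + 1 = w \<and> fdim (U' \<inter> W) = fdim (U \<inter> W) + 1"
proof -
  obtain x where x: "x \<in> W" "x \<notin> U"
  proof (cases "W \<subseteq> U")
    case True
    then have "U \<inter> W = W" by blast
    then have "U = W" using mx_eq[OF U W] mx_dim[OF W] by simp
    with ne show ?thesis by simp
  next
    case False then show ?thesis using that by blast
  qed
  obtain u where u: "u \<in> U" "Bp u x \<noteq> 0" using mx_perpD[OF U x(2)] by blast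
  define H where "H = U \<inter> {z. Bp x z = 0}"
  have subU: "fsubspace U" using mx_sub[OF U] .
  have "\<exists>u\<in>U. Bp x u \<noteq> 0" using u polar_sym by metis
  from hyper_int[OF subU this] have dH: "fdim H + 1 = w"
    unfolding H_def using mx_dim[OF U] by simp
  have sH: "fsubspace H"
    unfolding H_def using subU unfolding fv.subspace_def by (auto simp: polar_add_right polar_scale_right)
  have tsH: "totally_singular C H" using ts_sub[OF mx_ts[OF U] sH] by (auto simp: H_def)
  have xH: "x \<in> perp C H" by (auto simp: perp_def H_def polar_sym)
  have xnH: "x \<notin> H" using x by (auto simp: H_def)
  define U' where "U' = fv.span (insert x H)"
  have tsU': "totally_singular C U'" unfolding U'_def
    by (rule ts_insert[OF tsH mx_q[OF W x(1)] xH])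
  have dU': "fdim U' = w" unfolding U'_def using dim_span_insert[OF sH xnH] dH by simp
  have U'M: "U' \<in> Mx" using tsU' dU' by (simp add: dp_vertices_def)
  have HU': "H \<subseteq> U'" unfolding U'_def using fv.span_superset by blast
  have xU': "x \<in> U'" unfolding U'_def using fv.span_superset by blast
  have "H \<subseteq> U \<inter> U'" using HU' by (auto simp: H_def)
  then have ge1: "fdim H \<le> fdim (U \<inter> U')" by (rule fv.dim_subset)
  have "fdim (U \<inter> U') < w"
  proof (rule ccontr)
    assume "\<not> fdim (U \<inter> U') < w"
    then have "U = U'" using mx_eq[OF U U'M] by simp
    with x xU' show False by simp
  qed
  with ge1 dH have a1: "fdim (U \<inter> U') + 1 = w" by linarith
  have sUW: "fsubspace (U \<inter> W)" using mx_sub[OF U] mx_sub[OF W] by (rule fv.subspace_inter)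
  have UWH: "U \<inter> W \<subseteq> H" using mx_orth[OF W x(1)] by (auto simp: H_def)
  have "fv.span (insert x (U \<inter> W)) \<subseteq> U' \<inter> W"
  proof (rule Int_greatest)
    show "fv.span (insert x (U \<inter> W)) \<subseteq> U'"
      unfolding U'_def using UWH by (intro fv.span_mono) auto
    show "fv.span (insert x (U \<inter> W)) \<subseteq> W"
      using x(1) by (intro span_insert_sub[OF mx_sub[OF W]]) auto
  qed
  then have "fdim (fv.span (insert x (U \<inter> W))) \<le> fdim (U' \<inter> W)" by (rule fv.dim_subset)
  moreover have "fdim (fv.span (insert x (U \<inter> W))) = fdim (U \<inter> W) + 1"
    using dim_span_insert[OF sUW] x by simp
  moreover have "fdim (U \<inter> U') + fdim (U' \<inter> W) \<le> w + fdim (U \<inter> W)"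
    by (rule triangle[OF U U'M W])
  ultimately have "fdim (U' \<inter> W) = fdim (U \<inter> W) + 1" using a1 by linarith
  with a1 U'M show ?thesis by blast
qed

lemma hyp_span:
  assumes U: "U \<in> Mx" and sH: "fsubspace H" and HU: "H \<subseteq> U" and dH: "fdim H + 1 = w"
    and u: "u \<in> U" "u \<notin> H"
  shows "fv.span (insert u H) = U"
proof (rule fv.subspace_dim_equal)
  show "fsubspace (fv.span (insert u H))" by simp
  show "fsubspace U" by (rule mx_sub[OF U])
  show "fv.span (insert u H) \<subseteq> U" using u HU by (intro span_insert_sub[OF mx_sub[OF U]])
  show "fdim U \<le> fdim (fv.span (insert u H))" using dim_span_insert[OF sH u(2)] dH mx_dim[OF U] by simp
qed

lemma opp_nonorth:
  assumes U: "U \<in> Mx" and U': "U' \<in> Mx" and adj: "fdim (U \<inter> U') + 1 = w"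
    and u: "u \<in> U" "u \<notin> U'" and u': "u' \<in> U'" "u' \<notin> U"
  shows "Bp u u' \<noteq> 0"
proof
  assume o: "Bp u u' = 0"
  define H where "H = U \<inter> U'"
  have sH: "fsubspace H" unfolding H_def using mx_sub[OF U] mx_sub[OF U'] by (rule fv.subspace_inter)
  have sp: "fv.span (insert u H) = U"
    by (rule hyp_span[OF U sH _ _ u(1)]) (use adj u in \<open>auto simp: H_def\<close>)
  have "u' \<in> perp C (insert u H)"
    using o mx_orth[OF U' _ u'(1)] by (auto simp: perp_def H_def polar_sym)
  then have "u' \<in> perp C U" using perp_span[of C "insert u H"] sp by simp
  then have "u' \<in> U" using mx_perp[OF U] by simp
  with u' show False by simp
qed

lemma perp_ssum: "perp C (ssum A B) = perp C A \<inter> perp C B" if "0 \<in> A" "0 \<in> B"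
proof
  show "perp C (ssum A B) \<subseteq> perp C A \<inter> perp C B"
  proof
    fix y assume y: "y \<in> perp C (ssum A B)"
    have "\<forall>a\<in>A. Bp a y = 0"
    proof
      fix a assume "a \<in> A" then have "a + 0 \<in> ssum A B" using that by blast
      then show "Bp a y = 0" using y by (auto simp: perp_def)
    qed
    moreover have "\<forall>b\<in>B. Bp b y = 0"
    proof
      fix b assume "b \<in> B" then have "0 + b \<in> ssum A B" using that by blast
      then show "Bp b y = 0" using y by (auto simp: perp_def)
    qed
    ultimately show "y \<in> perp C A \<inter> perp C B" by (auto simp: perp_def)
  qed
  show "perp C A \<inter> perp C B \<subseteq> perp C (ssum A B)"
    by (auto simp: perp_def polar_add_left)
qed

lemma flip:
  assumes U: "U \<in> Mx" and U': "U' \<in> Mx" and W: "W \<in> Mx" and adj: "fdim (U \<inter> U') + 1 = w"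
  shows "fdim (U \<inter> W) \<noteq> fdim (U' \<inter> W)"
proof
  assume eq: "fdim (U \<inter> W) = fdim (U' \<inter> W)"
  define H where "H = U \<inter> U'"
  define K where "K = H \<inter> W"
  have sU: "fsubspace U" and sU': "fsubspace U'" and sW: "fsubspace W"
    using U U' W by (auto intro: mx_sub)
  have sH: "fsubspace H" unfolding H_def using sU sU' by (rule fv.subspace_inter)
  have sK: "fsubspace K" unfolding K_def using sH sW by (rule fv.subspace_inter)
  have sUW: "fsubspace (U \<inter> W)" using sU sW by (rule fv.subspace_inter)
  have sU'W: "fsubspace (U' \<inter> W)" using sU' sW by (rule fv.subspace_inter)
  have dH: "fdim H + 1 = w" using adj by (simp add: H_def)
  have KUW: "K \<subseteq> U \<inter> W" and KU'W: "K \<subseteq> U' \<inter> W" by (auto simp: K_def H_def)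
  have b1: "fdim H + fdim (U \<inter> W) \<le> fdim U + fdim (H \<inter> (U \<inter> W))"
    by (rule dim_sum_bound[OF sH sUW sU]) (auto simp: H_def)
  have "H \<inter> (U \<inter> W) = K" by (auto simp: H_def K_def)
  with b1 dH mx_dim[OF U] have le1: "fdim (U \<inter> W) \<le> fdim K + 1" by simp
  have ge1: "fdim K \<le> fdim (U \<inter> W)" using KUW by (rule fv.dim_subset)
  show False
  proof (cases "fdim (U \<inter> W) = fdim K")
    case False
    then have d1: "fdim (U \<inter> W) = fdim K + 1" using le1 ge1 by linarith
    obtain u where u: "u \<in> U \<inter> W" "u \<notin> H"
    proof (rule ccontr)
      assume "\<not> thesis"
      then have "U \<inter> W \<subseteq> K" using that by (auto simp: K_def)
      then have "fdim (U \<inter> W) \<le> fdim K" by (rule fv.dim_subset)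
      with d1 show False by simp
    qed
    obtain u' where u': "u' \<in> U' \<inter> W" "u' \<notin> H"
    proof (rule ccontr)
      assume "\<not> thesis"
      then have "U' \<inter> W \<subseteq> K" using that by (auto simp: K_def)
      then have "fdim (U' \<inter> W) \<le> fdim K" by (rule fv.dim_subset)
      with d1 eq show False by simp
    qed
    have "Bp u u' \<noteq> 0"
      by (rule opp_nonorth[OF U U' adj]) (use u u' in \<open>auto simp: H_def\<close>)
    moreover have "Bp u u' = 0" using mx_orth[OF W] u u' by auto
    ultimately show False by simp
  next
    case True
    have UWK: "U \<inter> W = K"
      by (rule fv.subspace_dim_equal[OF sK sUW KUW, symmetric]) (use True in simp)
    have U'WK: "U' \<inter> W = K"
      by (rule fv.subspace_dim_equal[OF sK sU'W KU'W, symmetric]) (use True eq in simp)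
    have sHW: "fsubspace (ssum H W)" by (rule fv.subspace_sums[OF sH sW])
    have "fdim (ssum H W) + fdim (H \<inter> W) = fdim H + fdim W" by (rule fv.dim_sums_Int[OF sH sW])
    then have dHW: "fdim (ssum H W) + fdim K = fdim H + w" using mx_dim[OF W] by (simp add: K_def)
    have pHW: "perp C (ssum H W) = perp C H \<inter> W"
      using perp_ssum[of H W] mx_perp[OF W] fv.subspace_0[OF sH] fv.subspace_0[OF sW] by simp
    have "fdim (perp C (ssum H W)) + fdim (ssum H W) = 2 * w" by (rule perp_dim[OF sHW])
    then have "fdim (perp C H \<inter> W) + fdim (ssum H W) = 2 * w" using pHW by simp
    then have dP: "fdim (perp C H \<inter> W) = fdim K + 1" using dHW dH by linarith
    obtain x where x: "x \<in> perp C H" "x \<in> W" "x \<notin> H"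
    proof (rule ccontr)
      assume "\<not> thesis"
      then have "perp C H \<inter> W \<subseteq> K" using that by (auto simp: K_def)
      then have "fdim (perp C H \<inter> W) \<le> fdim K" by (rule fv.dim_subset)
      with dP show False by simp
    qed
    have sUU': "fsubspace (ssum U U')" by (rule fv.subspace_sums[OF sU sU'])
    have "ssum U U' \<subseteq> perp C H"
    proof
      fix z assume "z \<in> ssum U U'"
      then obtain a b where z: "z = a + b" "a \<in> U" "b \<in> U'" by blast
      show "z \<in> perp C H"
        using z mx_orth[OF U _ z(2)] mx_orth[OF U' _ z(3)]
        by (auto simp: perp_def H_def polar_add_right)
    qed
    moreover have "fdim (ssum U U') + fdim (U \<inter> U') = fdim U + fdim U'" by (rule fv.dim_sums_Int[OF sU sU'])
    moreover have "fdim (perp C H) + fdim H = 2 * w" by (rule perp_dim[OF sH])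
    ultimately have "ssum U U' = perp C H"
      using fv.subspace_dim_equal[OF sUU' perp_subspace, of C H] dH mx_dim[OF U] mx_dim[OF U'] H_def
      by simp
    with x obtain a b where ab: "x = a + b" "a \<in> U" "b \<in> U'" by blast
    have "Q x = Q a + Q b + Bp a b" by (simp add: ab qform_add)
    then have o: "Bp a b = 0" using mx_q[OF W x(2)] mx_q[OF U ab(2)] mx_q[OF U' ab(3)] by simp
    have "a \<in> U' \<or> b \<in> U"
    proof (rule ccontr)
      assume "\<not> (a \<in> U' \<or> b \<in> U)"
      then have "Bp a b \<noteq> 0" using opp_nonorth[OF U U' adj] ab by auto
      with o show False by simp
    qed
    then show False
    proof
      assume "a \<in> U'"
      then have "x \<in> U'" using ab fv.subspace_add[OF sU'] by simp
      then have "x \<in> K" using U'WK x by blast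
      then show False using x by (auto simp: K_def)
    next
      assume "b \<in> U"
      then have "x \<in> U" using ab fv.subspace_add[OF sU] by simp
      then have "x \<in> K" using UWK x by blast
      then show False using x by (auto simp: K_def)
    qed
  qed
qed


definition dd where "dd U V = w - fdim (U \<inter> V)"

lemma dd_sym: "dd U V = dd V U"
  by (simp add: dd_def Int_commute)

lemma dd_zero: "U \<in> Mx \<Longrightarrow> V \<in> Mx \<Longrightarrow> dd U V = 0 \<longleftrightarrow> U = V"
  using mx_eq[of U V] mx_dim[of U] by (auto simp: dd_def)

lemma dd_self[simp]: "U \<in> Mx \<Longrightarrow> dd U U = 0"
  using dd_zero by blast

lemma dd_tri: "U \<in> Mx \<Longrightarrow> V \<in> Mx \<Longrightarrow> W \<in> Mx \<Longrightarrow> dd U W \<le> dd U V + dd V W"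
  using triangle[of U V W] int_dim_le[of U V] int_dim_le[of V W] int_dim_le[of U W]
  by (simp add: dd_def)

lemma dd_le: "U \<in> Mx \<Longrightarrow> dd U V \<le> w"
  by (simp add: dd_def)

lemma dd_step:
  assumes "U \<in> Mx" "W \<in> Mx" "U \<noteq> W"
  shows "\<exists>U'\<in>Mx. dd U U' = 1 \<and> dd U' W + 1 = dd U W"
proof -
  obtain U' where U': "U' \<in> Mx" "fdim (U \<inter> U') + 1 = w" "fdim (U' \<inter> W) = fdim (U \<inter> W) + 1"
    using step_toward[OF assms] by blast
  have "fdim (U' \<inter> W) \<le> w" using int_dim_le[OF U'(1)] .
  then show ?thesis using U' by (intro bexI[OF _ U'(1)]) (auto simp: dd_def)
qed

lemma dd_flip:
  assumes U: "U \<in> Mx" and U': "U' \<in> Mx" and W: "W \<in> Mx" and a: "dd U U' = 1"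
  shows "dd U W = dd U' W + 1 \<or> dd U' W = dd U W + 1"
proof -
  have adj: "fdim (U \<inter> U') + 1 = w" using a int_dim_le[OF U, of U'] by (simp add: dd_def)
  have "fdim (U \<inter> W) \<noteq> fdim (U' \<inter> W)" by (rule flip[OF U U' W adj])
  then have "dd U W \<noteq> dd U' W" using int_dim_le[OF U, of W] int_dim_le[OF U', of W] by (simp add: dd_def)
  moreover have "dd U W \<le> dd U U' + dd U' W" by (rule dd_tri[OF U U' W])
  moreover have "dd U' W \<le> dd U' U + dd U W" by (rule dd_tri[OF U' U W])
  ultimately show ?thesis using a dd_sym[of U' U] by linarith
qed

lemma parity:
  assumes "U \<in> Mx" "V \<in> Mx" "W \<in> Mx"
  shows "even (dd U V + dd V W + dd U W)"
  using assms
proof (induction "dd U V" arbitrary: U)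
  case 0
  then have "U = V" using dd_zero by simp
  then show ?case using 0 by simp
next
  case (Suc k)
  then have "U \<noteq> V" by auto
  then obtain U1 where U1: "U1 \<in> Mx" "dd U U1 = 1" "dd U1 V + 1 = dd U V"
    using dd_step[OF Suc.prems(1,2)] by blast
  have ih: "even (dd U1 V + dd V W + dd U1 W)"
    using Suc.hyps(1)[of U1] U1 Suc.hyps(2) Suc.prems by simp
  have "dd U W = dd U1 W + 1 \<or> dd U1 W = dd U W + 1" by (rule dd_flip[OF Suc.prems(1) U1(1) Suc.prems(3) U1(2)])
  then have "dd U V + dd V W + dd U W = (dd U1 V + dd V W + dd U1 W) + 2 \<or>
      dd U V + dd V W + dd U W = dd U1 V + dd V W + dd U1 W"
    using U1(3) by auto
  then show ?case
  proof
    assume e: "dd U V + dd V W + dd U W = (dd U1 V + dd V W + dd U1 W) + 2"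
    show ?case unfolding e using ih by presburger
  next
    assume e: "dd U V + dd V W + dd U W = dd U1 V + dd V W + dd U1 W"
    show ?case unfolding e using ih by presburger
  qed
qed

lemma extend_step:
  assumes X0: "X0 \<in> Mx" and Xm: "Xm \<in> Mx" and lt: "dd X0 Xm < w"
  shows "\<exists>X'\<in>Mx. dd Xm X' = 1 \<and> dd X0 X' = dd X0 Xm + 1"
proof -
  define A where "A = X0 \<inter> Xm"
  have sXm: "fsubspace Xm" using mx_sub[OF Xm] .
  have gt: "fdim A > 0" using lt int_dim_le[OF X0, of Xm] by (simp add: dd_def A_def)
  have "\<not> A \<subseteq> {0}"
  proof
    assume "A \<subseteq> {0}"
    then have "fdim A = 0" using fv.dim_eq_0[of A] by blast
    with gt show False by simp
  qed
  then obtain a where a: "a \<in> A" "a \<noteq> 0" by blast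
  obtain y where y: "Bp a y \<noteq> 0" using nd a(2) by (auto simp: nondegenerate_def)
  define H where "H = Xm \<inter> {z. Bp y z = 0}"
  have aXm: "a \<in> Xm" using a by (simp add: A_def)
  have "\<exists>u\<in>Xm. Bp y u \<noteq> 0" using aXm y polar_sym by metis
  from hyper_int[OF sXm this] have dH: "fdim H + 1 = w"
    unfolding H_def using mx_dim[OF Xm] by simp
  have sH: "fsubspace H"
    unfolding H_def using sXm unfolding fv.subspace_def by (auto simp: polar_add_right polar_scale_right)
  have HXm: "H \<subseteq> Xm" by (auto simp: H_def)
  have aH: "a \<notin> H" using y by (auto simp: H_def polar_sym)
  have tsH: "totally_singular C H" using ts_sub[OF mx_ts[OF Xm] sH HXm] .
  have dpH: "fdim (perp C H) = w + 1" using perp_dim[OF sH] dH by linarith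
  obtain z where z: "z \<in> perp C H" "z \<notin> Xm"
  proof (rule ccontr)
    assume "\<not> thesis"
    then have "perp C H \<subseteq> Xm" using that by blast
    then have "fdim (perp C H) \<le> fdim Xm" by (rule fv.dim_subset)
    with dpH mx_dim[OF Xm] show False by simp
  qed
  obtain v where v: "v \<in> Xm" "Bp v z \<noteq> 0" using mx_perpD[OF Xm z(2)] by blast
  define c where "c = Q z / Bp v z"
  define y' where "y' = z - fscale c v"
  have "Q y' = Q z + Q (fscale c v) - Bp z (fscale c v)" by (simp add: y'_def qform_diff)
  also have "Q (fscale c v) = 0" using mx_q[OF Xm v(1)] by (simp add: qform_scale)
  also have "Bp z (fscale c v) = c * Bp v z" by (simp add: polar_scale_right polar_sym)
  also have "c * Bp v z = Q z" using v(2) by (simp add: c_def)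
  finally have qy': "Q y' = 0" by simp
  have vH: "v \<in> perp C H" using mx_orth[OF Xm _ v(1)] HXm by (auto simp: perp_def)
  have y'H: "y' \<in> perp C H"
    unfolding y'_def using z(1) vH perp_subspace[of C H]
    by (intro fv.subspace_diff fv.subspace_scale) auto
  have y'Xm: "y' \<notin> Xm"
  proof
    assume "y' \<in> Xm"
    then have "y' + fscale c v \<in> Xm" using v(1) sXm by (intro fv.subspace_add fv.subspace_scale) auto
    then show False using z(2) by (simp add: y'_def)
  qed
  then have y'nH: "y' \<notin> H" using HXm by blast
  define X' where "X' = fv.span (insert y' H)"
  have tsX': "totally_singular C X'" unfolding X'_def by (rule ts_insert[OF tsH qy' y'H])
  have dX': "fdim X' = w" unfolding X'_def using dim_span_insert[OF sH y'nH] dH by simp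
  have X'M: "X' \<in> Mx" using tsX' dX' by (simp add: dp_vertices_def)
  have HX': "H \<subseteq> X'" unfolding X'_def using fv.span_superset by blast
  have y'X': "y' \<in> X'" unfolding X'_def using fv.span_superset by blast
  have HXX: "H \<subseteq> Xm \<inter> X'" using HX' HXm by blast
  then have ge1: "fdim H \<le> fdim (Xm \<inter> X')" by (rule fv.dim_subset)
  have "fdim (Xm \<inter> X') < w"
  proof (rule ccontr)
    assume "\<not> fdim (Xm \<inter> X') < w"
    then have "Xm = X'" using mx_eq[OF Xm X'M] by simp
    with y'Xm y'X' show False by simp
  qed
  with ge1 dH have a1: "fdim (Xm \<inter> X') + 1 = w" by linarith
  have HeqXX: "H = Xm \<inter> X'"
    by (rule fv.subspace_dim_equal[OF sH _ HXX]) (use a1 dH mx_sub[OF Xm] mx_sub[OF X'M] in \<open>auto intro: fv.subspace_inter\<close>)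
  have d1: "dd Xm X' = 1" using a1 by (simp add: dd_def)
  have "dd Xm X0 = dd X' X0 + 1 \<or> dd X' X0 = dd Xm X0 + 1" by (rule dd_flip[OF Xm X'M X0 d1])
  moreover have "\<not> dd Xm X0 = dd X' X0 + 1"
  proof
    assume h: "dd Xm X0 = dd X' X0 + 1"
    have "fdim (X0 \<inter> X') + fdim (X' \<inter> Xm) \<ge> w + fdim (X0 \<inter> Xm)"
      using h a1 int_dim_le[OF Xm, of X0] int_dim_le[OF X'M, of X0]
      by (simp add: dd_def Int_commute)
    then have "X0 \<inter> Xm \<subseteq> X'" by (rule convex[OF X0 X'M Xm])
    then have "a \<in> Xm \<inter> X'" using a by (auto simp: A_def)
    then show False using aH HeqXX by simp
  qed
  ultimately have "dd X' X0 = dd Xm X0 + 1" by simp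
  then show ?thesis using d1 X'M dd_sym by metis
qed


definition hyp :: "(nat \<Rightarrow> 'n \<Rightarrow> 'a) \<Rightarrow> (nat \<Rightarrow> 'n \<Rightarrow> 'a) \<Rightarrow> bool" where
  "hyp e f \<longleftrightarrow> (\<forall>i<w. \<forall>j<w. Bp (e i) (e j) = 0 \<and> Bp (f i) (f j) = 0 \<and>
      Bp (e i) (f j) = (if i = j then 1 else 0)) \<and> (\<forall>i<w. Q (e i) = 0 \<and> Q (f i) = 0)"

lemma dual_indep:
  assumes d: "\<forall>v'\<in>P. \<exists>u. \<forall>v\<in>P. Bp v u = (if v = v' then 1 else 0)"
  shows "fv.independent P"
  unfolding fv.independent_explicit_module
proof (intro allI impI)
  fix t u v assume h: "finite t" "t \<subseteq> P" "(\<Sum>v\<in>t. fscale (u v) v) = 0" "v \<in> t"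
  obtain dv where dv: "\<forall>x\<in>P. Bp x dv = (if x = v then 1 else 0)" using d h by blast
  have "0 = Bp (\<Sum>v\<in>t. fscale (u v) v) dv" using h(3) by simp
  also have "\<dots> = (\<Sum>x\<in>t. u x * Bp x dv)" by (simp add: polar_sum_left polar_scale_left)
  also have "\<dots> = (\<Sum>x\<in>t. if x = v then u x else 0)"
    by (rule sum.cong) (use dv h(2) in auto)
  also have "\<dots> = u v" using h(1,4) by simp
  finally show "u v = 0" by simp
qed

lemma hyp_facts:
  assumes "hyp e f" "i < w" "j < w"
  shows "Bp (e i) (e j) = 0" "Bp (f i) (f j) = 0" "Bp (e i) (f j) = (if i = j then 1 else 0)"
    "Bp (f j) (e i) = (if i = j then 1 else 0)" "Q (e i) = 0" "Q (f i) = 0"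
  using assms by (auto simp: hyp_def polar_sym[of C "f j"])

lemma hyp_inj:
  assumes h: "hyp e f" and i: "i < w" and j: "j < w"
  shows "e i = e j \<longleftrightarrow> i = j" "f i = f j \<longleftrightarrow> i = j" "e i \<noteq> f j"
proof -
  show "e i = e j \<longleftrightarrow> i = j"
    using hyp_facts(3)[OF h i i] hyp_facts(3)[OF h j i] by (cases "i = j") auto
  show "f i = f j \<longleftrightarrow> i = j"
    using hyp_facts(3)[OF h i i] hyp_facts(3)[OF h i j] by (cases "i = j") auto
  show "e i \<noteq> f j"
    using hyp_facts(3)[OF h i i] hyp_facts(2)[OF h j i] by auto
qed

lemma hyp_indep:
  assumes h: "hyp e f" and A: "A \<subseteq> {..<w}" and B: "B \<subseteq> {..<w}"
  shows "fv.independent (e ` A \<union> f ` B)"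
proof (rule dual_indep, rule ballI)
  fix v' assume "v' \<in> e ` A \<union> f ` B"
  then show "\<exists>u. \<forall>v\<in>e ` A \<union> f ` B. Bp v u = (if v = v' then 1 else 0)"
  proof
    assume "v' \<in> e ` A"
    then obtain i where i: "i \<in> A" "v' = e i" by blast
    have iw: "i < w" using i A by auto
    show ?thesis
    proof (intro exI[of _ "f i"] ballI)
      fix v assume "v \<in> e ` A \<union> f ` B"
      then show "Bp v (f i) = (if v = v' then 1 else 0)"
      proof
        assume "v \<in> e ` A"
        then obtain j where j: "j \<in> A" "v = e j" by blast
        have jw: "j < w" using j A by auto
        show ?thesis using hyp_facts(3)[OF h jw iw] hyp_inj(1)[OF h jw iw] i j by auto
      next
        assume "v \<in> f ` B"
        then obtain j where j: "j \<in> B" "v = f j" by blast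
        have jw: "j < w" using j B by auto
        show ?thesis using hyp_facts(2)[OF h jw iw] hyp_inj(3)[OF h iw jw] i j by auto
      qed
    qed
  next
    assume "v' \<in> f ` B"
    then obtain i where i: "i \<in> B" "v' = f i" by blast
    have iw: "i < w" using i B by auto
    show ?thesis
    proof (intro exI[of _ "e i"] ballI)
      fix v assume "v \<in> e ` A \<union> f ` B"
      then show "Bp v (e i) = (if v = v' then 1 else 0)"
      proof
        assume "v \<in> e ` A"
        then obtain j where j: "j \<in> A" "v = e j" by blast
        have jw: "j < w" using j A by auto
        show ?thesis using hyp_facts(1)[OF h jw iw] hyp_inj(3)[OF h jw iw] i j by auto
      next
        assume "v \<in> f ` B"
        then obtain j where j: "j \<in> B" "v = f j" by blast
        have jw: "j < w" using j B by auto
        show ?thesis using hyp_facts(4)[OF h iw jw] hyp_inj(2)[OF h jw iw] i j by auto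
      qed
    qed
  qed
qed

lemma hyp_card:
  assumes h: "hyp e f" and A: "A \<subseteq> {..<w}" and B: "B \<subseteq> {..<w}"
  shows "card (e ` A \<union> f ` B) = card A + card B"
proof -
  have fA: "finite A" and fB: "finite B" using A B finite_subset by auto
  have ie: "inj_on e A" using hyp_inj(1)[OF h] A by (auto simp: inj_on_def subset_iff)
  have if': "inj_on f B" using hyp_inj(2)[OF h] B by (auto simp: inj_on_def subset_iff)
  have disj: "e ` A \<inter> f ` B = {}" using hyp_inj(3)[OF h] A B by (auto simp: subset_iff)
  show ?thesis
    using card_Un_disjoint[OF finite_imageI[OF fA] finite_imageI[OF fB] disj]
      card_image[OF ie] card_image[OF if'] by simp
qed

lemma hyp_dim:
  assumes h: "hyp e f" and A: "A \<subseteq> {..<w}" and B: "B \<subseteq> {..<w}"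
  shows "fdim (fv.span (e ` A \<union> f ` B)) = card A + card B"
  using fv.dim_span_eq_card_independent[OF hyp_indep[OF h A B]] hyp_card[OF h A B] by simp


definition geo :: "(nat \<Rightarrow> ('n \<Rightarrow> 'a) set) \<Rightarrow> nat \<Rightarrow> bool" where
  "geo X m \<longleftrightarrow> (\<forall>j\<le>m. X j \<in> Mx) \<and> (\<forall>i j. i \<le> j \<longrightarrow> j \<le> m \<longrightarrow> dd (X i) (X j) = j - i)"

lemma geo_M: "geo X m \<Longrightarrow> j \<le> m \<Longrightarrow> X j \<in> Mx"
  by (simp add: geo_def)

lemma geo_dd: "geo X m \<Longrightarrow> i \<le> j \<Longrightarrow> j \<le> m \<Longrightarrow> dd (X i) (X j) = j - i"
  by (simp add: geo_def)

lemma geo_int_dim: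
  assumes g: "geo X m" and ij: "i \<le> j" "j \<le> m"
  shows "fdim (X i \<inter> X j) = w - (j - i)" "j - i \<le> w"
proof -
  have M: "X i \<in> Mx" "X j \<in> Mx" using geo_M[OF g] ij by auto
  have d: "dd (X i) (X j) = j - i" by (rule geo_dd[OF g ij])
  show "j - i \<le> w" using dd_le[OF M(1), of "X j"] d by simp
  show "fdim (X i \<inter> X j) = w - (j - i)" using d int_dim_le[OF M(1), of "X j"] by (simp add: dd_def)
qed

lemma geo_convex:
  assumes g: "geo X m" and ijk: "i \<le> j" "j \<le> k" "k \<le> m"
  shows "X i \<inter> X k \<subseteq> X j"
proof (rule convex)
  show "X i \<in> Mx" "X j \<in> Mx" "X k \<in> Mx" using geo_M[OF g] ijk by auto
  have a: "fdim (X i \<inter> X j) = w - (j - i)" using geo_int_dim[OF g] ijk by simp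
  have b: "fdim (X j \<inter> X k) = w - (k - j)" using geo_int_dim[OF g] ijk by simp
  have c: "fdim (X i \<inter> X k) = w - (k - i)" "k - i \<le> w" using geo_int_dim[OF g] ijk by auto
  show "w + fdim (X i \<inter> X k) \<le> fdim (X i \<inter> X j) + fdim (X j \<inter> X k)"
    using a b c ijk by linarith
qed

lemma hyp_basis:
  assumes g: "geo X w"
  shows "\<exists>e f. hyp e f \<and> (\<forall>k\<le>w. X k = fv.span (e ` {k..<w} \<union> f ` {0..<k}))"
proof -
  define E where "E k = X 0 \<inter> X k" for k
  define F where "F k = X k \<inter> X w" for k
  have XM: "\<And>j. j \<le> w \<Longrightarrow> X j \<in> Mx" using geo_M[OF g] by blast
  have dE: "\<And>k. k \<le> w \<Longrightarrow> fdim (E k) = w - k" using geo_int_dim[OF g] by (simp add: E_def)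
  have dF: "\<And>k. k \<le> w \<Longrightarrow> fdim (F k) = k" using geo_int_dim[OF g] by (simp add: F_def)
  have sE: "\<And>k. k \<le> w \<Longrightarrow> fsubspace (E k)"
    unfolding E_def using XM by (intro fv.subspace_inter mx_sub) auto
  have sF: "\<And>k. k \<le> w \<Longrightarrow> fsubspace (F k)"
    unfolding F_def using XM by (intro fv.subspace_inter mx_sub) auto
  have EX: "\<And>j k. j \<le> k \<Longrightarrow> k \<le> w \<Longrightarrow> E k \<subseteq> X j"
    unfolding E_def using geo_convex[OF g] by blast
  have EE: "\<And>j k. j \<le> k \<Longrightarrow> k \<le> w \<Longrightarrow> E k \<subseteq> E j"
    using EX by (auto simp: E_def)
  have FX: "\<And>j k. j \<le> k \<Longrightarrow> k \<le> w \<Longrightarrow> F j \<subseteq> X k"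
    unfolding F_def using geo_convex[OF g] by blast
  have FXw: "\<And>j. F j \<subseteq> X w" by (auto simp: F_def)
  have E0: "E 0 = X 0" by (simp add: E_def)
  have Ew: "E w \<subseteq> {0}" using dE[of w] fv.dim_eq_0[of "E w"] by simp
  have "\<forall>k. \<exists>v. k < w \<longrightarrow> v \<in> E k \<and> v \<notin> E (Suc k)"
  proof
    fix k show "\<exists>v. k < w \<longrightarrow> v \<in> E k \<and> v \<notin> E (Suc k)"
    proof (cases "k < w")
      case True
      show ?thesis
      proof (rule ccontr)
        assume "\<not> ?thesis"
        then have "E k \<subseteq> E (Suc k)" using True by blast
        then have "fdim (E k) \<le> fdim (E (Suc k))" by (rule fv.dim_subset)
        with dE[of k] dE[of "Suc k"] True show False by simp
      qed
    qed simp
  qed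
  then obtain e where e: "\<And>k. k < w \<Longrightarrow> e k \<in> E k \<and> e k \<notin> E (Suc k)" by metis
  have eX: "\<And>k j. k < w \<Longrightarrow> j \<le> k \<Longrightarrow> e k \<in> X j" using e EX by (meson less_imp_le subsetD)
  have eE: "\<And>k j. k < w \<Longrightarrow> j \<le> k \<Longrightarrow> e k \<in> E j" using e EE by (meson less_imp_le subsetD)
  have espan: "\<And>n. n \<le> w \<Longrightarrow> E (w - n) = fv.span (e ` {w - n..<w})"
  proof -
    fix n assume "n \<le> w"
    then show "E (w - n) = fv.span (e ` {w - n..<w})"
    proof (induction n)
      case 0
      have "0 \<in> E w" using sE[of w] fv.subspace_0 by auto
      then have "E w = {0}" using Ew by auto
      then show ?case by simp
    next
      case (Suc n)
      define k where "k = w - Suc n"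
      have kw: "k < w" using Suc.prems by (simp add: k_def)
      have Sk: "Suc k = w - n" using Suc.prems by (simp add: k_def)
      have IH: "E (Suc k) = fv.span (e ` {Suc k..<w})" using Suc.IH Suc.prems Sk by simp
      have sub1: "fv.span (e ` {k..<w}) \<subseteq> E k"
        using eE kw by (intro fv.span_minimal sE) auto
      have sub2: "fv.span (insert (e k) (E (Suc k))) \<subseteq> fv.span (e ` {k..<w})"
      proof (rule fv.span_minimal)
        have "e ` {Suc k..<w} \<subseteq> e ` {k..<w}" by auto
        then have "E (Suc k) \<subseteq> fv.span (e ` {k..<w})" unfolding IH by (rule fv.span_mono)
        moreover have "e k \<in> fv.span (e ` {k..<w})" using kw by (intro fv.span_base) auto
        ultimately show "insert (e k) (E (Suc k)) \<subseteq> fv.span (e ` {k..<w})" by blast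
      qed simp
      have "fdim (fv.span (insert (e k) (E (Suc k)))) = fdim (E (Suc k)) + 1"
        using dim_span_insert[OF sE[of "Suc k"]] e[OF kw] kw by simp
      then have "fdim (fv.span (insert (e k) (E (Suc k)))) = fdim (E k)"
        using dE[of k] dE[of "Suc k"] kw by simp
      then have "fdim (fv.span (e ` {k..<w})) \<ge> fdim (E k)"
        using fv.dim_subset[OF sub2] by simp
      then have "fv.span (e ` {k..<w}) = E k"
        using fv.subspace_dim_equal[OF _ sE sub1] kw by simp
      then show ?case by (simp add: k_def)
    qed
  qed
  have X0span: "X 0 = fv.span (e ` {0..<w})" using espan[of w] E0 by simp
  have X0w: "X 0 \<inter> X w \<subseteq> {0}" using Ew by (simp add: E_def)
  have "\<forall>k. \<exists>v. k < w \<longrightarrow> v \<in> F (Suc k) \<and> (\<forall>i<w. Bp (e i) v = (if i = k then 1 else 0))"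
  proof
    fix k show "\<exists>v. k < w \<longrightarrow> v \<in> F (Suc k) \<and> (\<forall>i<w. Bp (e i) v = (if i = k then 1 else 0))"
    proof (cases "k < w")
      case False then show ?thesis by simp
    next
      case kw: True
      define P where "P = perp C (e ` {0..<k})"
      have "card (UNIV :: 'n set) \<le> fdim P + fdim (e ` {0..<k})"
        unfolding P_def by (rule perp_dim_lower)
      moreover have "fdim (e ` {0..<k}) \<le> k"
        using fv.dim_le_card'[of "e ` {0..<k}"] card_image_le[of "{0..<k}" e] by simp
      ultimately have dP: "2 * w \<le> fdim P + k" using cardn by simp
      have "fdim (F (Suc k)) + fdim P \<le> fdim (UNIV :: ('n \<Rightarrow> 'a) set) + fdim (F (Suc k) \<inter> P)"
        by (rule dim_sum_bound) (use sF[of "Suc k"] kw in \<open>auto simp: P_def perp_subspace\<close>)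
      then have "fdim (F (Suc k) \<inter> P) \<ge> 1" using dP dF[of "Suc k"] kw cardn by simp
      then have ge: "fdim (F (Suc k) \<inter> P) \<ge> 1" .
      have "\<not> F (Suc k) \<inter> P \<subseteq> {0}"
      proof
        assume "F (Suc k) \<inter> P \<subseteq> {0}"
        then have "fdim (F (Suc k) \<inter> P) = 0" using fv.dim_eq_0[of "F (Suc k) \<inter> P"] by blast
        with ge show False by simp
      qed
      then obtain f0 where f0: "f0 \<in> F (Suc k)" "f0 \<in> P" "f0 \<noteq> 0" by blast
      have nz: "Bp (e k) f0 \<noteq> 0"
      proof
        assume z: "Bp (e k) f0 = 0"
        have "\<forall>i<w. Bp (e i) f0 = 0"
        proof (intro allI impI)
          fix i assume iw: "i < w"
          show "Bp (e i) f0 = 0"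
          proof (cases "i < k")
            case True then show ?thesis using f0(2) by (auto simp: P_def perp_def)
          next
            case False
            show ?thesis
            proof (cases "i = k")
              case True then show ?thesis using z by simp
            next
              case False
              then have "Suc k \<le> i" using \<open>\<not> i < k\<close> by simp
              then have "e i \<in> X (Suc k)" using eX iw by blast
              moreover have "f0 \<in> X (Suc k)" using f0(1) by (simp add: F_def)
              ultimately show ?thesis using mx_orth[OF XM[of "Suc k"]] kw by simp
            qed
          qed
        qed
        then have "f0 \<in> perp C (e ` {0..<w})" by (auto simp: perp_def)
        then have "f0 \<in> perp C (X 0)" using X0span perp_span by metis
        then have "f0 \<in> X 0" using mx_perp[OF XM[of 0]] by simp
        moreover have "f0 \<in> X w" using f0(1) by (simp add: F_def)
        ultimately show False using X0w f0(3) by blast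
      qed
      define v where "v = fscale (1 / Bp (e k) f0) f0"
      have "v \<in> F (Suc k)" unfolding v_def using f0(1) sF[of "Suc k"] kw fv.subspace_scale by auto
      moreover have "\<forall>i<w. Bp (e i) v = (if i = k then 1 else 0)"
      proof (intro allI impI)
        fix i assume iw: "i < w"
        have "Bp (e i) v = Bp (e i) f0 / Bp (e k) f0" by (simp add: v_def polar_scale_right)
        moreover have "i < k \<Longrightarrow> Bp (e i) f0 = 0" using f0(2) by (auto simp: P_def perp_def)
        moreover have "k < i \<Longrightarrow> Bp (e i) f0 = 0"
        proof -
          assume ki: "k < i"
          then have "e i \<in> X (Suc k)" using eX iw by simp
          moreover have "f0 \<in> X (Suc k)" using f0(1) by (simp add: F_def)
          ultimately show ?thesis using mx_orth[OF XM[of "Suc k"]] kw by simp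
        qed
        ultimately show "Bp (e i) v = (if i = k then 1 else 0)" using nz by (cases "i < k"; cases "i = k"; simp)
      qed
      ultimately show ?thesis by blast
    qed
  qed
  then obtain f where f: "\<And>k. k < w \<Longrightarrow> f k \<in> F (Suc k) \<and> (\<forall>i<w. Bp (e i) (f k) = (if i = k then 1 else 0))"
    by metis
  have fX: "\<And>k j. k < w \<Longrightarrow> Suc k \<le> j \<Longrightarrow> j \<le> w \<Longrightarrow> f k \<in> X j" using f FX by blast
  have fXw: "\<And>k. k < w \<Longrightarrow> f k \<in> X w" using f FXw by blast
  have e0: "\<And>k. k < w \<Longrightarrow> e k \<in> X 0" using eX by simp
  have h: "hyp e f"
    unfolding hyp_def
    using mx_orth[OF XM[of 0]] mx_orth[OF XM[of w]] mx_q[OF XM[of 0]] mx_q[OF XM[of w]] e0 fXw f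
    by auto
  have "\<forall>k\<le>w. X k = fv.span (e ` {k..<w} \<union> f ` {0..<k})"
  proof (intro allI impI)
    fix k assume kw: "k \<le> w"
    have sub: "fv.span (e ` {k..<w} \<union> f ` {0..<k}) \<subseteq> X k"
    proof (rule fv.span_minimal)
      show "e ` {k..<w} \<union> f ` {0..<k} \<subseteq> X k" using eX fX kw by auto
      show "fsubspace (X k)" using mx_sub[OF XM[OF kw]] .
    qed
    have "fdim (fv.span (e ` {k..<w} \<union> f ` {0..<k})) = card {k..<w} + card {0..<k}"
      by (rule hyp_dim[OF h]) (use kw in auto)
    then have "fdim (fv.span (e ` {k..<w} \<union> f ` {0..<k})) = fdim (X k)"
      using kw mx_dim[OF XM[OF kw]] by simp
    then show "X k = fv.span (e ` {k..<w} \<union> f ` {0..<k})"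
      using fv.subspace_dim_equal[OF _ mx_sub[OF XM[OF kw]] sub] by simp
  qed
  with h show ?thesis by blast
qed


definition comb :: "(nat \<Rightarrow> 'n \<Rightarrow> 'a) \<Rightarrow> (nat \<Rightarrow> 'n \<Rightarrow> 'a) \<Rightarrow> (nat \<Rightarrow> 'a) \<Rightarrow> (nat \<Rightarrow> 'a) \<Rightarrow> nat \<Rightarrow> 'n \<Rightarrow> 'a" where
  "comb e f a b n = (\<Sum>i<n. fscale (a i) (e i)) + (\<Sum>i<n. fscale (b i) (f i))"

lemma comb_pair:
  assumes h: "hyp e f" and n: "n \<le> w" and j: "j < w"
  shows "Bp (comb e f a b n) (f j) = (if j < n then a j else 0)"
    "Bp (comb e f a b n) (e j) = (if j < n then b j else 0)"
proof -
  have "Bp (comb e f a b n) (f j) = (\<Sum>i<n. a i * Bp (e i) (f j)) + (\<Sum>i<n. b i * Bp (f i) (f j))"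
    by (simp add: comb_def polar_add_left polar_sum_left polar_scale_left)
  also have "(\<Sum>i<n. b i * Bp (f i) (f j)) = 0"
    using hyp_facts(2)[OF h _ j] n by (intro sum.neutral) auto
  also have "(\<Sum>i<n. a i * Bp (e i) (f j)) = (\<Sum>i<n. if i = j then a i else 0)"
    using hyp_facts(3)[OF h _ j] n by (intro sum.cong) auto
  finally show "Bp (comb e f a b n) (f j) = (if j < n then a j else 0)" by simp
  have "Bp (comb e f a b n) (e j) = (\<Sum>i<n. a i * Bp (e i) (e j)) + (\<Sum>i<n. b i * Bp (f i) (e j))"
    by (simp add: comb_def polar_add_left polar_sum_left polar_scale_left)
  also have "(\<Sum>i<n. a i * Bp (e i) (e j)) = 0"
    using hyp_facts(1)[OF h _ j] n by (intro sum.neutral) auto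
  also have "(\<Sum>i<n. b i * Bp (f i) (e j)) = (\<Sum>i<n. if i = j then b i else 0)"
    using hyp_facts(4)[OF h j] n by (intro sum.cong) auto
  finally show "Bp (comb e f a b n) (e j) = (if j < n then b j else 0)" by simp
qed

lemma comb_Q:
  assumes h: "hyp e f" and n: "n \<le> w"
  shows "Q (comb e f a b n) = (\<Sum>i<n. a i * b i)"
  using n
proof (induction n)
  case 0
  have c0: "comb e f a b 0 = 0" by (simp add: comb_def)
  show ?case unfolding c0 qform_zero by simp
next
  case (Suc n)
  have nw: "n < w" using Suc.prems by simp
  define T where "T = fscale (a n) (e n) + fscale (b n) (f n)"
  have cs: "comb e f a b (Suc n) = comb e f a b n + T"
    by (simp add: comb_def T_def algebra_simps)
  have "Bp (comb e f a b n) T = a n * Bp (comb e f a b n) (e n) + b n * Bp (comb e f a b n) (f n)"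
    by (simp add: T_def polar_add_right polar_scale_right)
  also have "\<dots> = 0" using comb_pair[OF h _ nw, of n a b] nw by simp
  finally have bT: "Bp (comb e f a b n) T = 0" .
  have "Q T = Q (fscale (a n) (e n)) + Q (fscale (b n) (f n)) + Bp (fscale (a n) (e n)) (fscale (b n) (f n))"
    by (simp add: T_def qform_add)
  also have "\<dots> = a n * b n"
    using hyp_facts[OF h nw nw] by (simp add: qform_scale polar_scale_left polar_scale_right)
  finally have qT: "Q T = a n * b n" .
  show ?case unfolding cs qform_add using Suc.IH nw bT qT by simp
qed

lemma hyp_span_UNIV:
  assumes h: "hyp e f"
  shows "fv.span (e ` {..<w} \<union> f ` {..<w}) = UNIV"
proof -
  have "fdim (fv.span (e ` {..<w} \<union> f ` {..<w})) = 2 * w" using hyp_dim[OF h] by simp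
  moreover have "fdim (UNIV :: ('n \<Rightarrow> 'a) set) = 2 * w" using cardn by simp
  ultimately have d: "fdim (UNIV :: ('n \<Rightarrow> 'a) set) \<le> fdim (fv.span (e ` {..<w} \<union> f ` {..<w}))" by simp
  show ?thesis using fv.subspace_dim_equal[OF fv.subspace_span fv.subspace_UNIV subset_UNIV d] .
qed

lemma comb_expand:
  assumes h: "hyp e f"
  shows "x = comb e f (\<lambda>i. Bp x (f i)) (\<lambda>i. Bp x (e i)) w"
proof -
  define d where "d = x - comb e f (\<lambda>i. Bp x (f i)) (\<lambda>i. Bp x (e i)) w"
  have "d \<in> perp C (e ` {..<w} \<union> f ` {..<w})"
  proof -
    have "\<forall>j<w. Bp (e j) d = 0 \<and> Bp (f j) d = 0"
      using comb_pair[OF h order_refl] by (simp add: d_def polar_diff_right polar_sym[of C "e _"] polar_sym[of C "f _"])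
    then show ?thesis by (auto simp: perp_def)
  qed
  then have "d \<in> perp C UNIV" using perp_span hyp_span_UNIV[OF h] by metis
  then have "d = 0" using perp_UNIV by simp
  then show ?thesis by (simp add: d_def)
qed

lemma hyp_iso:
  assumes h: "hyp e f" and h': "hyp e' f'"
  defines "g \<equiv> \<lambda>x. comb e' f' (\<lambda>i. Bp x (f i)) (\<lambda>i. Bp x (e i)) w"
  defines "g' \<equiv> \<lambda>x. comb e f (\<lambda>i. Bp x (f' i)) (\<lambda>i. Bp x (e' i)) w"
  shows "\<forall>x. Q (g x) = Q x" "\<forall>x. g' (g x) = x" "\<forall>x. g (g' x) = x"
    "Vector_Spaces.linear fscale fscale g" "\<forall>i<w. g (e i) = e' i \<and> g (f i) = f' i"
proof -
  have pg: "\<And>x j. j < w \<Longrightarrow> Bp (g x) (f' j) = Bp x (f j) \<and> Bp (g x) (e' j) = Bp x (e j)"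
    unfolding g_def using comb_pair[OF h' order_refl] by simp
  have pg': "\<And>x j. j < w \<Longrightarrow> Bp (g' x) (f j) = Bp x (f' j) \<and> Bp (g' x) (e j) = Bp x (e' j)"
    unfolding g'_def using comb_pair[OF h order_refl] by simp
  show "\<forall>x. Q (g x) = Q x"
  proof
    fix x
    have "Q (g x) = (\<Sum>i<w. Bp x (f i) * Bp x (e i))" unfolding g_def by (rule comb_Q[OF h' order_refl])
    also have "\<dots> = Q (comb e f (\<lambda>i. Bp x (f i)) (\<lambda>i. Bp x (e i)) w)" by (rule comb_Q[OF h order_refl, symmetric])
    also have "\<dots> = Q x" using comb_expand[OF h, of x] by simp
    finally show "Q (g x) = Q x" .
  qed
  show "\<forall>x. g' (g x) = x"
  proof
    fix x
    have "g' (g x) = comb e f (\<lambda>i. Bp x (f i)) (\<lambda>i. Bp x (e i)) w"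
      unfolding g'_def comb_def using pg[of _ x] by (intro arg_cong2[where f="(+)"] sum.cong) auto
    then show "g' (g x) = x" using comb_expand[OF h, of x] by simp
  qed
  show "\<forall>x. g (g' x) = x"
  proof
    fix x
    have "g (g' x) = comb e' f' (\<lambda>i. Bp x (f' i)) (\<lambda>i. Bp x (e' i)) w"
      unfolding g_def comb_def using pg'[of _ x] by (intro arg_cong2[where f="(+)"] sum.cong) auto
    then show "g (g' x) = x" using comb_expand[OF h', of x] by simp
  qed
  show "Vector_Spaces.linear fscale fscale g"
    unfolding Vector_Spaces.linear_iff
  proof (intro conjI allI)
    show "vector_space (fscale :: 'a \<Rightarrow> ('n \<Rightarrow> 'a) \<Rightarrow> _)" by unfold_locales
    show "vector_space (fscale :: 'a \<Rightarrow> ('n \<Rightarrow> 'a) \<Rightarrow> _)" by unfold_locales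
    fix x y c
    show "g (x + y) = g x + g y"
      by (simp add: g_def comb_def polar_add_left fv.scale_left_distrib sum.distrib algebra_simps)
    show "g (fscale c x) = fscale c (g x)"
      by (simp add: g_def comb_def polar_scale_left fv.scale_right_distrib fv.scale_sum_right)
  qed
  show "\<forall>i<w. g (e i) = e' i \<and> g (f i) = f' i"
  proof (intro allI impI conjI)
    fix j assume j: "j < w"
    have "g (e j) = (\<Sum>i<w. if i = j then e' i else 0) + (\<Sum>i<w. 0)"
      unfolding g_def comb_def
      using hyp_facts(1,4)[OF h _ j] hyp_facts(3)[OF h j] hyp_facts(1)[OF h j]
      by (intro arg_cong2[where f="(+)"] sum.cong) auto
    then show "g (e j) = e' j" using j by simp
    have "g (f j) = (\<Sum>i<w. 0) + (\<Sum>i<w. if i = j then f' i else 0)"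
      unfolding g_def comb_def
      using hyp_facts(2)[OF h j] hyp_facts(3)[OF h j] hyp_facts(4)[OF h _ j]
      by (intro arg_cong2[where f="(+)"] sum.cong) auto
    then show "g (f j) = f' j" using j by simp
  qed
qed


lemma chain_up:
  assumes M: "\<forall>j\<le>m. X j \<in> Mx" and step: "\<forall>j<m. dd (X j) (X (Suc j)) \<le> 1"
  shows "i + d \<le> m \<Longrightarrow> dd (X i) (X (i + d)) \<le> d"
proof (induction d)
  case 0 then show ?case using M by simp
next
  case (Suc d)
  then have "dd (X i) (X (i + d)) \<le> d" by simp
  moreover have "dd (X (i + d)) (X (Suc (i + d))) \<le> 1" using step Suc.prems by simp
  moreover have "dd (X i) (X (Suc (i + d))) \<le> dd (X i) (X (i + d)) + dd (X (i + d)) (X (Suc (i + d)))"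
    using M Suc.prems by (intro dd_tri) auto
  ultimately show ?case by simp
qed

lemma chain_geo:
  assumes M: "\<forall>j\<le>m. X j \<in> Mx" and step: "\<forall>j<m. dd (X j) (X (Suc j)) \<le> 1"
    and far: "m \<le> dd (X 0) (X m)"
  shows "geo X m"
  unfolding geo_def
proof (intro conjI allI impI)
  fix j assume "j \<le> m" then show "X j \<in> Mx" using M by simp
next
  fix i j assume ij: "i \<le> j" "j \<le> m"
  have up: "\<And>a b. a \<le> b \<Longrightarrow> b \<le> m \<Longrightarrow> dd (X a) (X b) \<le> b - a"
  proof -
    fix a b assume "a \<le> b" "b \<le> m"
    then show "dd (X a) (X b) \<le> b - a" using chain_up[OF M step, of a "b - a"] by simp
  qed
  have "dd (X 0) (X m) \<le> dd (X 0) (X i) + dd (X i) (X m)" using M ij by (intro dd_tri) auto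
  moreover have "dd (X i) (X m) \<le> dd (X i) (X j) + dd (X j) (X m)" using M ij by (intro dd_tri) auto
  moreover have "dd (X 0) (X i) \<le> i" using up[of 0 i] ij by simp
  moreover have "dd (X j) (X m) \<le> m - j" using up[of j m] ij by simp
  moreover have "dd (X i) (X j) \<le> j - i" using up ij by simp
  ultimately show "dd (X i) (X j) = j - i" using far ij by linarith
qed

lemma geo_extend:
  assumes "geo X m" "m \<le> w"
  shows "\<exists>Y. geo Y w \<and> (\<forall>j\<le>m. Y j = X j)"
  using assms
proof (induction "w - m" arbitrary: X m)
  case 0
  then have "m = w" by simp
  then show ?case using 0 by blast
next
  case (Suc k)
  then have mw: "m < w" by simp
  have X0: "X 0 \<in> Mx" and Xm: "X m \<in> Mx" using geo_M[OF Suc.prems(1)] by auto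
  have d0m: "dd (X 0) (X m) = m" using geo_dd[OF Suc.prems(1), of 0 m] by simp
  obtain X' where X': "X' \<in> Mx" "dd (X m) X' = 1" "dd (X 0) X' = dd (X 0) (X m) + 1"
    using extend_step[OF X0 Xm] d0m mw by auto
  define X2 where "X2 = X(Suc m := X')"
  have g2: "geo X2 (Suc m)"
  proof (rule chain_geo)
    show "\<forall>j\<le>Suc m. X2 j \<in> Mx" using geo_M[OF Suc.prems(1)] X'(1) by (auto simp: X2_def le_Suc_eq)
    show "\<forall>j<Suc m. dd (X2 j) (X2 (Suc j)) \<le> 1"
    proof (intro allI impI)
      fix j assume j: "j < Suc m"
      show "dd (X2 j) (X2 (Suc j)) \<le> 1"
      proof (cases "j = m")
        case True then show ?thesis using X'(2) by (simp add: X2_def)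
      next
        case False
        then have "Suc j \<le> m" using j by simp
        then show ?thesis using geo_dd[OF Suc.prems(1), of j "Suc j"] by (simp add: X2_def)
      qed
    qed
    show "Suc m \<le> dd (X2 0) (X2 (Suc m))" using X'(3) d0m by (simp add: X2_def)
  qed
  have "k = w - Suc m" using Suc.hyps(2) by simp
  then obtain Y where Y: "geo Y w" "\<forall>j\<le>Suc m. Y j = X2 j" using Suc.hyps(1)[OF _ g2] mw by auto
  then show ?case by (auto simp: X2_def)
qed


lemma half_to_geo:
  assumes len: "length xs = Suc l" and M: "\<forall>i\<le>l. xs ! i \<in> Mx"
    and adj: "\<forall>i<l. dd (xs ! i) (xs ! Suc i) = 2" and far: "dd (xs ! 0) (xs ! l) = 2 * l"
  shows "\<exists>X. geo X w \<and> (\<forall>i\<le>l. X (2 * i) = xs ! i)"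
proof -
  have "\<forall>i. \<exists>M. i < l \<longrightarrow> M \<in> Mx \<and> dd (xs ! i) M = 1 \<and> dd M (xs ! Suc i) = 1"
  proof
    fix i show "\<exists>M. i < l \<longrightarrow> M \<in> Mx \<and> dd (xs ! i) M = 1 \<and> dd M (xs ! Suc i) = 1"
    proof (cases "i < l")
      case True
      have Mi: "xs ! i \<in> Mx" "xs ! Suc i \<in> Mx" using M True by auto
      have "xs ! i \<noteq> xs ! Suc i" using adj True dd_self[OF Mi(1)] by auto
      then obtain U' where "U' \<in> Mx" "dd (xs ! i) U' = 1" "dd U' (xs ! Suc i) + 1 = dd (xs ! i) (xs ! Suc i)"
        using dd_step[OF Mi] by blast
      then show ?thesis using adj True by auto
    qed simp
  qed
  then obtain mid where mid: "\<And>i. i < l \<Longrightarrow> mid i \<in> Mx \<and> dd (xs ! i) (mid i) = 1 \<and> dd (mid i) (xs ! Suc i) = 1"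
    by metis
  define X where "X j = (if even j then xs ! (j div 2) else mid (j div 2))" for j
  have g: "geo X (2 * l)"
  proof (rule chain_geo)
    show "\<forall>j\<le>2 * l. X j \<in> Mx"
    proof (intro allI impI)
      fix j assume j: "j \<le> 2 * l"
      show "X j \<in> Mx"
      proof (cases "even j")
        case True then show ?thesis using M j by (simp add: X_def)
      next
        case False
        then have "j div 2 < l" using j by presburger
        then show ?thesis using mid False by (simp add: X_def)
      qed
    qed
    show "\<forall>j<2 * l. dd (X j) (X (Suc j)) \<le> 1"
    proof (intro allI impI)
      fix j assume j: "j < 2 * l"
      show "dd (X j) (X (Suc j)) \<le> 1"
      proof (cases "even j")
        case True
        then have "j div 2 < l" "Suc j div 2 = j div 2" using j by presburger+
        then show ?thesis using mid True by (simp add: X_def)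
      next
        case False
        then have "j div 2 < l" "Suc j div 2 = Suc (j div 2)" using j by presburger+
        then show ?thesis using mid False by (simp add: X_def)
      qed
    qed
    show "2 * l \<le> dd (X 0) (X (2 * l))" using far by (simp add: X_def)
  qed
  have "2 * l \<le> w" using far dd_le[of "xs ! 0" "xs ! l"] M by auto
  then obtain Y where Y: "geo Y w" "\<forall>j\<le>2 * l. Y j = X j" using geo_extend[OF g] by blast
  have "\<forall>i\<le>l. Y (2 * i) = xs ! i" using Y(2) by (simp add: X_def)
  with Y(1) show ?thesis by blast
qed

lemma img_props:
  assumes lin: "Vector_Spaces.linear fscale fscale g" and inv: "\<forall>x. g' (g x) = x"
    and Qg: "\<forall>x. Q (g x) = Q x"
  shows "\<And>S. fdim (g ` S) = fdim S"
    "\<And>U V. g ` (U \<inter> V) = g ` U \<inter> g ` V"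
    "\<And>U. U \<in> Mx \<Longrightarrow> g ` U \<in> Mx"
    "\<And>U V. U \<in> Mx \<Longrightarrow> dd (g ` U) (g ` V) = dd U V"
proof -
  have inj: "inj g" using inv by (metis injI)
  show dimg: "\<And>S. fdim (g ` S) = fdim S"
    using fvp.dim_image_eq[OF lin] inj by (simp add: inj_on_def inj_def)
  show intg: "\<And>U V. g ` (U \<inter> V) = g ` U \<inter> g ` V" using inj by (simp add: image_Int)
  show "\<And>U. U \<in> Mx \<Longrightarrow> g ` U \<in> Mx"
  proof -
    fix U assume U: "U \<in> Mx"
    have "fsubspace (g ` U)" using fvp.linear_subspace_image[OF lin mx_sub[OF U]] .
    moreover have "\<forall>x\<in>g ` U. Q x = 0" using Qg mx_q[OF U] by auto
    moreover have "fdim (g ` U) = w" using dimg mx_dim[OF U] by simp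
    ultimately show "g ` U \<in> Mx" by (simp add: dp_vertices_def totally_singular_def)
  qed
  show "\<And>U V. U \<in> Mx \<Longrightarrow> dd (g ` U) (g ` V) = dd U V"
  proof -
    fix U V
    have "g ` U \<inter> g ` V = g ` (U \<inter> V)" using intg by simp
    then show "dd (g ` U) (g ` V) = dd U V" by (simp add: dd_def dimg)
  qed
qed

end

locale qf0 = qf +
  fixes U0 assumes U0M: "U0 \<in> dp_vertices C w"
begin

abbreviation HV where "HV \<equiv> half_vertices C w U0"
abbreviation HE where "HE \<equiv> half_adj w"

lemma hv_iff: "U \<in> HV \<longleftrightarrow> U \<in> Mx \<and> even (dd U U0)"
  by (simp add: half_vertices_def dd_def)

lemma adj_iff: "U \<in> Mx \<Longrightarrow> HE U V \<longleftrightarrow> dd U V = 2"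
  using int_dim_le[of U V] by (auto simp: half_adj_def dd_def)

lemma hv_even: "U \<in> HV \<Longrightarrow> V \<in> HV \<Longrightarrow> even (dd U V)"
  using parity[of U V U0] U0M by (auto simp: hv_iff dd_sym[of V U0])

lemma walk_Cons2: "walk V E (x # y # xs) \<longleftrightarrow> x \<in> V \<and> E x y \<and> walk V E (y # xs)"
proof
  assume a: "walk V E (x # y # xs)"
  have "E x y" using a unfolding walk_def by (metis Suc_less_eq length_Cons nth_Cons_0 nth_Cons_Suc zero_less_Suc)
  moreover have "\<forall>i. Suc i < length (y # xs) \<longrightarrow> E ((y # xs) ! i) ((y # xs) ! Suc i)"
  proof (intro allI impI)
    fix i assume "Suc i < length (y # xs)"
    then have "Suc (Suc i) < length (x # y # xs)" by simp
    then show "E ((y # xs) ! i) ((y # xs) ! Suc i)" using a unfolding walk_def by fastforce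
  qed
  ultimately show "x \<in> V \<and> E x y \<and> walk V E (y # xs)" using a by (auto simp: walk_def)
next
  assume a: "x \<in> V \<and> E x y \<and> walk V E (y # xs)"
  show "walk V E (x # y # xs)"
    unfolding walk_def
  proof (intro conjI allI impI)
    show "x # y # xs \<noteq> []" by simp
    show "set (x # y # xs) \<subseteq> V" using a by (auto simp: walk_def)
    fix i assume i: "Suc i < length (x # y # xs)"
    show "E ((x # y # xs) ! i) ((x # y # xs) ! Suc i)"
    proof (cases i)
      case 0 then show ?thesis using a by simp
    next
      case (Suc j) then show ?thesis using a i unfolding walk_def by auto
    qed
  qed
qed

lemma walk_dd: "walk HV HE xs \<Longrightarrow> dd (hd xs) (last xs) \<le> 2 * (length xs - 1)"
proof (induction xs rule: induct_list012)
  case 1 then show ?case by (simp add: walk_def)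
next
  case (2 x) then show ?case by (simp add: walk_def hv_iff)
next
  case (3 x y zs)
  have w: "x \<in> HV" "HE x y" "walk HV HE (y # zs)" using 3(3) walk_Cons2[of HV HE x y zs] by simp_all
  have yH: "y \<in> HV" using w(3) by (simp add: walk_def)
  have "set (y # zs) \<subseteq> HV" using w(3) by (simp only: walk_def)
  then have lH: "last (y # zs) \<in> HV" using last_in_set[of "y # zs"] by blast
  have "dd x y = 2" using adj_iff w(1,2) hv_iff by auto
  moreover have "dd x (last (y # zs)) \<le> dd x y + dd y (last (y # zs))"
    using w(1) yH lH by (intro dd_tri) (auto simp: hv_iff)
  moreover have "dd y (last (y # zs)) \<le> 2 * (length (y # zs) - 1)" using 3(2) w(3) by simp
  ultimately show ?case by simp
qed

lemma walk_exists:
  assumes "U \<in> HV" "V \<in> HV"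
  shows "\<exists>xs. walk HV HE xs \<and> hd xs = U \<and> last xs = V \<and> length xs = Suc (dd U V div 2)"
  using assms
proof (induction "dd U V div 2" arbitrary: U)
  case 0
  have "even (dd U V)" using hv_even 0 by simp
  then have "dd U V = 0" using 0(1) by presburger
  then have "U = V" using dd_zero 0 by (simp add: hv_iff)
  then show ?case using 0 by (intro exI[of _ "[U]"]) (auto simp: walk_def)
next
  case (Suc n)
  have UM: "U \<in> Mx" and VM: "V \<in> Mx" using Suc.prems by (auto simp: hv_iff)
  have ev: "even (dd U V)" using hv_even Suc.prems by simp
  then have ge2: "dd U V \<ge> 2" using Suc.hyps(2) by presburger
  then have "U \<noteq> V" using UM by auto
  then obtain U1 where U1: "U1 \<in> Mx" "dd U U1 = 1" "dd U1 V + 1 = dd U V" using dd_step[OF UM VM] by blast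
  have "U1 \<noteq> V" using U1 ge2 VM by auto
  then obtain U2 where U2: "U2 \<in> Mx" "dd U1 U2 = 1" "dd U2 V + 1 = dd U1 V" using dd_step[OF U1(1) VM] by blast
  have "even (dd U U1 + dd U1 U2 + dd U U2)" by (rule parity[OF UM U1(1) U2(1)])
  then have evU2: "even (dd U U2)" using U1(2) U2(2) by simp
  have "dd U U2 \<le> dd U U1 + dd U1 U2" by (rule dd_tri[OF UM U1(1) U2(1)])
  moreover have "dd U U2 \<noteq> 0"
  proof
    assume "dd U U2 = 0"
    then have "U = U2" using dd_zero UM U2(1) by simp
    then show False using U1(3) U2(3) by simp
  qed
  ultimately have d2: "dd U U2 = 2" using evU2 U1(2) U2(2) by presburger
  have "even (dd U2 U + dd U U0 + dd U2 U0)" by (rule parity[OF U2(1) UM U0M])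
  then have "even (dd U2 U0)" using d2 dd_sym[of U2 U] Suc.prems(1) by (simp add: hv_iff)
  then have U2H: "U2 \<in> HV" using U2(1) by (simp add: hv_iff)
  have "n = dd U2 V div 2" using Suc.hyps(2) U1(3) U2(3) by presburger
  then obtain xs where xs: "walk HV HE xs" "hd xs = U2" "last xs = V" "length xs = Suc (dd U2 V div 2)"
    using Suc.hyps(1)[of U2] U2H Suc.prems(2) by blast
  obtain ys where ys: "xs = U2 # ys" using xs(2,4) by (cases xs) auto
  have "walk HV HE (U # xs)"
    unfolding ys walk_Cons2 using Suc.prems(1) xs(1) ys adj_iff[OF UM] d2 by simp
  moreover have "length (U # xs) = Suc (dd U V div 2)" using xs(4) U1(3) U2(3) ev by simp
  ultimately show ?case using xs(3) ys by (intro exI[of _ "U # xs"]) auto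
qed

lemma gdist_eq:
  assumes "U \<in> HV" "V \<in> HV"
  shows "gdist HV HE U V = dd U V div 2"
  unfolding gdist_def
proof (rule Least_equality)
  show "\<exists>xs. walk HV HE xs \<and> hd xs = U \<and> last xs = V \<and> length xs = Suc (dd U V div 2)"
    by (rule walk_exists[OF assms])
  fix n assume "\<exists>xs. walk HV HE xs \<and> hd xs = U \<and> last xs = V \<and> length xs = Suc n"
  then obtain xs where "walk HV HE xs" "hd xs = U" "last xs = V" "length xs = Suc n" by blast
  then have "dd U V \<le> 2 * n" using walk_dd by fastforce
  then show "dd U V div 2 \<le> n" by simp
qed


lemma geod_facts:
  assumes g: "geodesic HV HE xs"
  shows "xs \<noteq> []" "\<forall>i<length xs. xs ! i \<in> HV"
    "\<forall>i. Suc i < length xs \<longrightarrow> dd (xs ! i) (xs ! Suc i) = 2"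
    "dd (xs ! 0) (xs ! (length xs - 1)) = 2 * (length xs - 1)"
proof -
  have wk: "walk HV HE xs" and gd: "gdist HV HE (hd xs) (last xs) = length xs - 1"
    using g by (auto simp: geodesic_def)
  show ne: "xs \<noteq> []" using wk by (simp add: walk_def)
  show inV: "\<forall>i<length xs. xs ! i \<in> HV" using wk by (auto simp: walk_def)
  show "\<forall>i. Suc i < length xs \<longrightarrow> dd (xs ! i) (xs ! Suc i) = 2"
  proof (intro allI impI)
    fix i assume i: "Suc i < length xs"
    then have "HE (xs ! i) (xs ! Suc i)" using wk by (simp add: walk_def)
    moreover have "xs ! i \<in> Mx" using inV i by (simp add: hv_iff)
    ultimately show "dd (xs ! i) (xs ! Suc i) = 2" using adj_iff by simp
  qed
  have h0: "hd xs = xs ! 0" using ne by (simp add: hd_conv_nth)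
  have hl: "last xs = xs ! (length xs - 1)" using ne by (simp add: last_conv_nth)
  have a: "xs ! 0 \<in> HV" "xs ! (length xs - 1) \<in> HV" using inV ne by auto
  have "dd (xs ! 0) (xs ! (length xs - 1)) div 2 = length xs - 1"
    using gd gdist_eq[OF a] h0 hl by simp
  moreover have "even (dd (xs ! 0) (xs ! (length xs - 1)))" using hv_even[OF a] .
  ultimately show "dd (xs ! 0) (xs ! (length xs - 1)) = 2 * (length xs - 1)" by presburger
qed

lemma hv_img:
  assumes lin: "Vector_Spaces.linear fscale fscale h" and inv: "\<forall>x. h' (h x) = x"
    and Qh: "\<forall>x. Q (h x) = Q x" and A: "A \<in> HV" and B: "B \<in> HV" and hA: "h ` A = B"
    and U: "U \<in> HV"
  shows "h ` U \<in> HV"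
proof -
  note ip = img_props[OF lin inv Qh]
  have UM: "U \<in> Mx" and AM: "A \<in> Mx" and BM: "B \<in> Mx" using U A B by (auto simp: hv_iff)
  have hUM: "h ` U \<in> Mx" using ip(3)[OF UM] .
  have "even (dd (h ` U) B + dd B U0 + dd (h ` U) U0)" by (rule parity[OF hUM BM U0M])
  moreover have "dd (h ` U) B = dd U A" using ip(4)[OF UM, of A] hA by simp
  moreover have "even (dd U A)" using hv_even[OF U A] .
  moreover have "even (dd B U0)" using B by (simp add: hv_iff)
  ultimately have "even (dd (h ` U) U0)" by simp
  then show ?thesis using hUM by (simp add: hv_iff)
qed

theorem half_geodesic_transitive: "geodesic_transitive HV HE"
  unfolding geodesic_transitive_def
proof (intro allI impI, elim conjE)
  fix xs ys assume gx: "geodesic HV HE xs" and gy: "geodesic HV HE ys" and len: "length xs = length ys"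
  note fx = geod_facts[OF gx] and fy = geod_facts[OF gy]
  obtain l where lx: "length xs = Suc l" using fx(1) by (cases xs) auto
  have ly: "length ys = Suc l" using lx len by simp
  have Mxs: "\<forall>i\<le>l. xs ! i \<in> Mx" using fx(2) lx by (auto simp: hv_iff)
  have Mys: "\<forall>i\<le>l. ys ! i \<in> Mx" using fy(2) ly by (auto simp: hv_iff)
  obtain X where X: "geo X w" "\<forall>i\<le>l. X (2 * i) = xs ! i"
    using half_to_geo[OF lx Mxs] fx(3,4) lx by auto
  obtain Y where Y: "geo Y w" "\<forall>i\<le>l. Y (2 * i) = ys ! i"
    using half_to_geo[OF ly Mys] fy(3,4) ly by auto
  obtain e f where ef: "hyp e f" "\<forall>k\<le>w. X k = fv.span (e ` {k..<w} \<union> f ` {0..<k})"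
    using hyp_basis[OF X(1)] by blast
  obtain e' f' where ef': "hyp e' f'" "\<forall>k\<le>w. Y k = fv.span (e' ` {k..<w} \<union> f' ` {0..<k})"
    using hyp_basis[OF Y(1)] by blast
  define g where "g = (\<lambda>x. comb e' f' (\<lambda>i. Bp x (f i)) (\<lambda>i. Bp x (e i)) w)"
  define g' where "g' = (\<lambda>x. comb e f (\<lambda>i. Bp x (f' i)) (\<lambda>i. Bp x (e' i)) w)"
  note I1 = hyp_iso[OF ef(1) ef'(1), folded g_def g'_def]
  note I2 = hyp_iso[OF ef'(1) ef(1), folded g_def g'_def]
  have ge: "\<forall>i<w. g (e i) = e' i \<and> g (f i) = f' i" unfolding g_def by (rule I1(5))
  have Q1: "\<forall>x. Q (g x) = Q x" unfolding g_def by (rule I1(1))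
  have inv1: "\<forall>x. g' (g x) = x" unfolding g_def g'_def by (rule I1(2))
  have inv2: "\<forall>x. g (g' x) = x" unfolding g_def g'_def by (rule I1(3))
  have lin1: "Vector_Spaces.linear fscale fscale g" using I1(4) by (simp add: g_def)
  have Q2: "\<forall>x. Q (g' x) = Q x" unfolding g'_def by (rule I2(1))
  have lin2: "Vector_Spaces.linear fscale fscale g'" using I2(4) by (simp add: g'_def)
  have gX: "\<And>k. k \<le> w \<Longrightarrow> g ` X k = Y k"
  proof -
    fix k assume kw: "k \<le> w"
    have "g ` (e ` {k..<w} \<union> f ` {0..<k}) = e' ` {k..<w} \<union> f' ` {0..<k}"
    proof -
      have "g ` e ` {k..<w} = e' ` {k..<w}" unfolding image_image using ge by (intro image_cong) auto
      moreover have "g ` f ` {0..<k} = f' ` {0..<k}" unfolding image_image using ge kw by (intro image_cong) auto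
      ultimately show ?thesis by (simp add: image_Un)
    qed
    then show "g ` X k = Y k"
      using ef(2) ef'(2) kw fvp.linear_span_image[OF lin1] by metis
  qed
  have lw: "2 * l \<le> w" using fx(4) lx dd_le[of "xs ! 0" "xs ! l"] Mxs by auto
  have gxs: "\<And>i. i \<le> l \<Longrightarrow> g ` (xs ! i) = ys ! i"
    using gX X(2) Y(2) lw by (metis le_trans mult_le_mono2)
  define \<sigma> where "\<sigma> = (\<lambda>U. g ` U)"
  have A: "xs ! 0 \<in> HV" and B: "ys ! 0 \<in> HV" using fx(2) fy(2) lx ly by auto
  have gA: "g ` (xs ! 0) = ys ! 0" using gxs by simp
  have g'B: "g' ` (ys ! 0) = xs ! 0" using gA[symmetric] inv1 by (simp add: image_image)
  have img: "\<And>U. U \<in> HV \<Longrightarrow> g ` U \<in> HV" by (rule hv_img[OF lin1 inv1 Q1 A B gA])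
  have img': "\<And>U. U \<in> HV \<Longrightarrow> g' ` U \<in> HV" by (rule hv_img[OF lin2 inv2 Q2 B A g'B])
  have aut: "graph_aut HV HE \<sigma>"
    unfolding graph_aut_def
  proof (intro conjI ballI)
    show "bij_betw \<sigma> HV HV"
      unfolding bij_betw_def
    proof
      show "inj_on \<sigma> HV"
      proof (rule inj_onI)
        fix U V assume "\<sigma> U = \<sigma> V"
        then have "g' ` g ` U = g' ` g ` V" by (simp add: \<sigma>_def)
        then show "U = V" using inv1 by (simp add: image_image)
      qed
      show "\<sigma> ` HV = HV"
      proof
        show "\<sigma> ` HV \<subseteq> HV" using img by (auto simp: \<sigma>_def)
        show "HV \<subseteq> \<sigma> ` HV"
        proof
          fix U assume U: "U \<in> HV"
          have "\<sigma> (g' ` U) = U" using inv2 by (simp add: \<sigma>_def image_image)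
          then show "U \<in> \<sigma> ` HV" using img'[OF U] by (metis imageI)
        qed
      qed
    qed
    fix U V assume U: "U \<in> HV" and V: "V \<in> HV"
    have UM: "U \<in> Mx" using U by (simp add: hv_iff)
    have gUM: "g ` U \<in> Mx" using img[OF U] by (simp add: hv_iff)
    show "HE (\<sigma> U) (\<sigma> V) \<longleftrightarrow> HE U V"
      using adj_iff[OF gUM] adj_iff[OF UM] img_props(4)[OF lin1 inv1 Q1 UM, of V]
      by (simp add: \<sigma>_def)
  qed
  have "map \<sigma> xs = ys"
  proof (rule nth_equalityI)
    show "length (map \<sigma> xs) = length ys" using len by simp
    fix i assume "i < length (map \<sigma> xs)"
    then have "i \<le> l" using lx by simp
    then show "map \<sigma> xs ! i = ys ! i" using gxs lx by (simp add: \<sigma>_def)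
  qed
  with aut show "\<exists>\<sigma>. graph_aut HV HE \<sigma> \<and> map \<sigma> xs = ys" by blast
qed

end

theorem corollary3p6:
  fixes C :: "'n::finite \<Rightarrow> 'n \<Rightarrow> 'a::{field,finite}"
    and w :: nat and U0 :: "('n \<Rightarrow> 'a) set"
  assumes "w \<ge> 2"
    and "card (UNIV :: 'n set) = 2 * w"
    and "nondegenerate C"
    and "witt_index C = w"
    and "U0 \<in> dp_vertices C w"
  shows "geodesic_transitive (half_vertices C w U0) (half_adj w)"
proof -
  interpret qf0 C w U0
    by unfold_locales (use assms in simp_all)
  show ?thesis by (rule half_geodesic_transitive)
qed

end
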